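(* Let $n\ge2$, let $\phi$ be an automorphism of ${\mathfrak{A}}_n$, and let $Z = (z_1,z_2,\dots)\in{\mathbb{B}}_n^\infty$ be such that $\{z_i\}\cap\{\hat\phi(z_i)\} = \varnothing$. If $\rho$ is a $k\times k$ nest representation of ${\mathfrak{A}}_n\times_\phi{\mathbb{Z}}^+$ in ${\mathcal{N}}_{Z,k}$, then $\rho(U) = 0$.
   Context: ${\mathfrak{A}}_n$ is the non-commutative disc algebra generated by the left creation operators $S_1,\dots,S_n$ on full Fock space; automorphisms are isometric. ${\mathfrak{A}}_n\times_\phi{\mathbb{Z}}^+$ is the universal operator algebra generated by ${\mathfrak{A}}_n$ and a contraction $U$ with $AU=U\phi(A)$ for $A\in{\mathfrak{A}}_n$. For $z$ in the closed unit ball $\overline{{\mathbb{B}}}_n$ of ${\mathbb{C}}^n$, $\theta_z$ denotes the character of ${\mathfrak{A}}_n$ with $\theta_z(S_i)=z_i$, and $\hat\phi:\overline{{\mathbb{B}}}_n\to\overline{{\mathbb{B}}}_n$ is defined by $\theta_{\hat\phi(z)} = \theta_z\circ\phi$. For $z\in{\mathbb{B}}_n$, $\theta_{z,0}$ denotes the character of ${\mathfrak{A}}_n\times_\phi{\mathbb{Z}}^+$ extending $\theta_z$ with $\theta_{z,0}(U)=0$. Let ${\mathfrak{T}}_k$ be the algebra of upper triangular $k\times k$ matrices with respect to the standard basis $\xi_1,\dots,\xi_k$ of ${\mathbb{C}}^k$. A $k\times k$ nest representation is a representation $\pi$ (algebra homomorphism) of ${\mathfrak{A}}_n\times_\phi{\mathbb{Z}}^+$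 onto ${\mathfrak{T}}_k$; its diagonal characters are $\theta_{\pi,i}(A) = \langle\pi(A)\xi_i,\xi_i\rangle$, $1\le i\le k$. For a sequence $Z=(z_1,z_2,\dots)$ of points of ${\mathbb{B}}_n$ with at least $k$ entries, ${\mathcal{N}}_{Z,k}$ is the set of $k\times k$ nest representations $\pi$ with $\theta_{\pi,i} = \theta_{z_i,0}$ for $1\le i\le k$. *)

theory Defs
  imports Complex_Main "HOL-Library.Function_Algebras"
begin

text \<open>Full Fock space over C^n: vectors are functions on words (lists of letters
  0..n-1, the letter i standing for the generator e_{i+1}) with square-summable
  coefficients.  Operators are functions on such vectors, normalised to be 0 on
  vectors outside the Fock space.\<close>

type_synonym fvec = "nat list \<Rightarrow> complex"
type_synonym fop = "fvec \<Rightarrow> fvec"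

definition words :: "nat \<Rightarrow> nat list set" where
  "words n = {w. set w \<subseteq> {..<n}}"

definition sqsums :: "fvec \<Rightarrow> real set" where
  "sqsums f = (\<lambda>F. \<Sum>w\<in>F. (cmod (f w))^2) ` {F. finite F}"

definition fock :: "nat \<Rightarrow> fvec set" where
  "fock n = {f. (\<forall>w. w \<notin> words n \<longrightarrow> f w = 0) \<and> bdd_above (sqsums f)}"

definition fnorm :: "fvec \<Rightarrow> real" where
  "fnorm f = sqrt (Sup (sqsums f))"

definition bop :: "nat \<Rightarrow> fop \<Rightarrow> bool" where
  "bop n T \<longleftrightarrow> T ` fock n \<subseteq> fock n \<and> (\<forall>f. f \<notin> fock n \<longrightarrow> T f = 0)
     \<and> (\<forall>f\<in>fock n. \<forall>g\<in>fock n. \<forall>a b::complex.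
          T (\<lambda>w. a * f w + b * g w) = (\<lambda>w. a * T f w + b * T g w))
     \<and> (\<exists>C. \<forall>f\<in>fock n. fnorm (T f) \<le> C * fnorm f)"

definition opnorm :: "nat \<Rightarrow> fop \<Rightarrow> real" where
  "opnorm n T = Sup ((\<lambda>f. fnorm (T f)) ` {f\<in>fock n. fnorm f \<le> 1})"

definition IdF :: "nat \<Rightarrow> fop" where
  "IdF n f = (if f \<in> fock n then f else 0)"

text \<open>Left creation operator S_{i+1}: xi_w \<mapsto> xi_{(i+1) w}.\<close>
definition Sop :: "nat \<Rightarrow> nat \<Rightarrow> fop" where
  "Sop n i f = (if f \<in> fock n then
      (\<lambda>w. case w of [] \<Rightarrow> 0 | j # v \<Rightarrow> (if j = i then f v else 0)) else 0)"

definition Sword :: "nat \<Rightarrow> nat list \<Rightarrow> fop" where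
  "Sword n w = foldr (\<lambda>i T. Sop n i \<circ> T) w (IdF n)"

definition poly_ops :: "nat \<Rightarrow> fop set" where
  "poly_ops n = {T. \<exists>F c. finite F \<and> F \<subseteq> words n \<and>
      T = (\<lambda>f. \<lambda>x. \<Sum>w\<in>F. c w * Sword n w f x)}"

definition discalg :: "nat \<Rightarrow> fop set" where
  "discalg n = {T. bop n T \<and>
      (\<forall>e>0. \<exists>p\<in>poly_ops n. opnorm n (\<lambda>f. T f - p f) < e)}"

definition lincomb :: "complex \<Rightarrow> fop \<Rightarrow> complex \<Rightarrow> fop \<Rightarrow> fop" where
  "lincomb a A b B = (\<lambda>f. \<lambda>x. a * A f x + b * B f x)"

definition is_aut :: "nat \<Rightarrow> (fop \<Rightarrow> fop) \<Rightarrow> bool" where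
  "is_aut n \<phi> \<longleftrightarrow> bij_betw \<phi> (discalg n) (discalg n) \<and>
     (\<forall>A\<in>discalg n. \<forall>B\<in>discalg n. \<phi> (A \<circ> B) = \<phi> A \<circ> \<phi> B \<and>
        (\<forall>a b. \<phi> (lincomb a A b B) = lincomb a (\<phi> A) b (\<phi> B)))"

definition is_char :: "nat \<Rightarrow> (fop \<Rightarrow> complex) \<Rightarrow> bool" where
  "is_char n \<chi> \<longleftrightarrow> \<chi> (IdF n) = 1 \<and> (\<forall>A. A \<notin> discalg n \<longrightarrow> \<chi> A = 0) \<and>
     (\<forall>A\<in>discalg n. \<forall>B\<in>discalg n. \<chi> (A \<circ> B) = \<chi> A * \<chi> B \<and>
        (\<forall>a b. \<chi> (lincomb a A b B) = a * \<chi> A + b * \<chi> B))"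

text \<open>Points of C^n are functions nat => complex vanishing from index n on
  (coordinate i stands for z_{i+1}).\<close>
definition ballN :: "nat \<Rightarrow> (nat \<Rightarrow> complex) set" where
  "ballN n = {z. (\<forall>i\<ge>n. z i = 0) \<and> (\<Sum>i<n. (cmod (z i))^2) < 1}"

definition cballN :: "nat \<Rightarrow> (nat \<Rightarrow> complex) set" where
  "cballN n = {z. (\<forall>i\<ge>n. z i = 0) \<and> (\<Sum>i<n. (cmod (z i))^2) \<le> 1}"

definition theta :: "nat \<Rightarrow> (nat \<Rightarrow> complex) \<Rightarrow> fop \<Rightarrow> complex" where
  "theta n z = (THE \<chi>. is_char n \<chi> \<and> (\<forall>i<n. \<chi> (Sop n i) = z i))"

definition phihat :: "nat \<Rightarrow> (fop \<Rightarrow> fop) \<Rightarrow> (nat \<Rightarrow> complex) \<Rightarrow> (nat \<Rightarrow> complex)" where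
  "phihat n \<phi> z = (THE w. w \<in> cballN n \<and>
      theta n w = (\<lambda>A. if A \<in> discalg n then theta n z (\<phi> A) else 0))"

text \<open>The (algebraic) semicrossed product A_n x_phi Z^+: an element X stands for
  the finite sum  sum_m U^m X(m)  with X(m) in A_n; the covariance relation
  A U = U phi(A) gives (U^a A)(U^b B) = U^(a+b) phi^b(A) B.\<close>
definition cp :: "nat \<Rightarrow> (nat \<Rightarrow> fop) set" where
  "cp n = {X. (\<forall>m. X m \<in> discalg n) \<and> finite {m. X m \<noteq> 0}}"

definition cpmult :: "(fop \<Rightarrow> fop) \<Rightarrow> (nat \<Rightarrow> fop) \<Rightarrow> (nat \<Rightarrow> fop) \<Rightarrow> (nat \<Rightarrow> fop)" where
  "cpmult \<phi> X Y = (\<lambda>m. \<Sum>b\<le>m. (\<phi> ^^ b) (X (m - b)) \<circ> Y b)"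

definition cpscale :: "complex \<Rightarrow> (nat \<Rightarrow> fop) \<Rightarrow> (nat \<Rightarrow> fop)" where
  "cpscale c X = (\<lambda>m f x. c * X m f x)"

definition cpU :: "nat \<Rightarrow> (nat \<Rightarrow> fop)" where
  "cpU n = (\<lambda>m. if m = 1 then IdF n else 0)"

text \<open>k x k matrices as functions on indices 0..k-1 (index i stands for xi_{i+1}).\<close>
type_synonym cmat = "nat \<Rightarrow> nat \<Rightarrow> complex"

definition mmult :: "nat \<Rightarrow> cmat \<Rightarrow> cmat \<Rightarrow> cmat" where
  "mmult k M N = (\<lambda>i j. \<Sum>l<k. M i l * N l j)"

definition uptri :: "nat \<Rightarrow> cmat set" where
  "uptri k = {M. \<forall>i j. (k \<le> i \<or> k \<le> j \<or> j < i) \<longrightarrow> M i j = 0}"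

definition nest_rep :: "nat \<Rightarrow> (fop \<Rightarrow> fop) \<Rightarrow> nat \<Rightarrow> ((nat \<Rightarrow> fop) \<Rightarrow> cmat) \<Rightarrow> bool" where
  "nest_rep n \<phi> k \<rho> \<longleftrightarrow>
     (\<forall>X\<in>cp n. \<forall>Y\<in>cp n. \<rho> (X + Y) = \<rho> X + \<rho> Y \<and>
        \<rho> (cpmult \<phi> X Y) = mmult k (\<rho> X) (\<rho> Y)) \<and>
     (\<forall>X\<in>cp n. \<forall>c. \<rho> (cpscale c X) = (\<lambda>i j. c * \<rho> X i j)) \<and>
     \<rho> ` cp n = uptri k"

definition theta0 :: "nat \<Rightarrow> (nat \<Rightarrow> complex) \<Rightarrow> (nat \<Rightarrow> fop) \<Rightarrow> complex" where
  "theta0 n z X = theta n z (X 0)"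

text \<open>N_{Z,k}; Z is 0-indexed (Z i stands for z_{i+1}).\<close>
definition NZk :: "nat \<Rightarrow> (fop \<Rightarrow> fop) \<Rightarrow> (nat \<Rightarrow> nat \<Rightarrow> complex) \<Rightarrow> nat
    \<Rightarrow> ((nat \<Rightarrow> fop) \<Rightarrow> cmat) set" where
  "NZk n \<phi> Z k = {\<rho>. nest_rep n \<phi> k \<rho> \<and>
      (\<forall>i<k. \<forall>X\<in>cp n. \<rho> X i i = theta0 n (Z i) X)}"

end

theory Submission
  imports Defs "HOL-Analysis.L2_Norm"
begin


abbreviation l2 :: "nat list set \<Rightarrow> fvec \<Rightarrow> real" where
  "l2 F f \<equiv> L2_set (\<lambda>x. cmod (f x)) F"

lemma sqsums_mem: "finite F \<Longrightarrow> (\<Sum>w\<in>F. (cmod (f w))^2) \<in> sqsums f"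
  unfolding sqsums_def by auto

lemma sqsums_ne: "sqsums f \<noteq> {}"
  using sqsums_mem[of "{}" f] by auto

lemma fnorm_nonneg: "bdd_above (sqsums f) \<Longrightarrow> 0 \<le> fnorm f"
  unfolding fnorm_def using sqsums_mem[of "{}" f]
  by (metis cSup_upper finite.emptyI real_sqrt_ge_zero sum.empty)

lemma l2_le_fnorm: assumes "bdd_above (sqsums f)" "finite F" shows "l2 F f \<le> fnorm f"
proof -
  have "(\<Sum>w\<in>F. (cmod (f w))^2) \<le> Sup (sqsums f)"
    using cSup_upper[OF sqsums_mem[OF assms(2)] assms(1)] .
  thus ?thesis unfolding fnorm_def L2_set_def by simp
qed

lemma fnorm_leI:
  assumes "\<And>F. finite F \<Longrightarrow> l2 F f \<le> C"
  shows "bdd_above (sqsums f)" "fnorm f \<le> C"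
proof -
  have C0: "0 \<le> C" using assms[of "{}"] by simp
  have le: "s \<le> C^2" if "s \<in> sqsums f" for s
  proof -
    from that obtain F where F: "finite F" "s = (\<Sum>w\<in>F. (cmod (f w))^2)"
      unfolding sqsums_def by auto
    have "sqrt s \<le> C" using assms[OF F(1)] F(2) unfolding L2_set_def by simp
    moreover have "0 \<le> s" using F(2) by (simp add: sum_nonneg)
    ultimately show ?thesis using C0 by (metis real_sqrt_le_iff real_sqrt_pow2 power2_le_imp_le abs_of_nonneg real_sqrt_abs real_sqrt_le_mono sqrt_le_D)
  qed
  show "bdd_above (sqsums f)" by (rule bdd_aboveI[where M="C^2"]) (rule le)
  have "Sup (sqsums f) \<le> C^2" using le sqsums_ne by (intro cSup_least) auto
  thus "fnorm f \<le> C" unfolding fnorm_def using C0 real_sqrt_le_mono[of "Sup (sqsums f)" "C^2"] by simp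
qed

lemma fock_bdd: "f \<in> fock n \<Longrightarrow> bdd_above (sqsums f)"
  unfolding fock_def by auto

lemma fock_vanish: "f \<in> fock n \<Longrightarrow> w \<notin> words n \<Longrightarrow> f w = 0"
  unfolding fock_def by auto

lemma cmod_le_fnorm: assumes "bdd_above (sqsums f)" shows "cmod (f x) \<le> fnorm f"
  using l2_le_fnorm[OF assms, of "{x}"] by simp

lemma fnorm_eq0: assumes "bdd_above (sqsums f)" "fnorm f = 0" shows "f = 0"
  using cmod_le_fnorm[OF assms(1)] assms(2) by (auto intro!: ext)

lemma L2_set_zero[simp]: "L2_set (\<lambda>x. 0) F = 0"
  by (simp add: L2_set_0')

lemma fnorm_0[simp]: "fnorm (\<lambda>x. 0) = 0"
proof -
  have "fnorm (\<lambda>x. 0) \<le> 0" by (rule fnorm_leI) simp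
  moreover have "bdd_above (sqsums (\<lambda>x. 0::complex))" by (rule fnorm_leI[where C=0]) simp
  ultimately show ?thesis using fnorm_nonneg by (metis order.antisym)
qed

lemma zero_fock[simp]: "(\<lambda>x. 0) \<in> fock n"
  unfolding fock_def using fnorm_leI(1)[where f="\<lambda>x. 0" and C=0] by simp

lemma zero_fock'[simp]: "0 \<in> fock n"
  using zero_fock by (simp add: zero_fun_def)

lemma l2_lin: "l2 F (\<lambda>x. a * f x + b * g x) \<le> cmod a * l2 F f + cmod b * l2 F g"
proof -
  have "l2 F (\<lambda>x. a * f x + b * g x) \<le> L2_set (\<lambda>x. cmod a * cmod (f x) + cmod b * cmod (g x)) F"
    by (rule L2_set_mono) (auto simp: norm_mult[symmetric] intro: norm_triangle_ineq order_trans)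
  also have "\<dots> \<le> L2_set (\<lambda>x. cmod a * cmod (f x)) F + L2_set (\<lambda>x. cmod b * cmod (g x)) F"
    by (rule L2_set_triangle_ineq)
  also have "\<dots> = cmod a * l2 F f + cmod b * l2 F g"
    by (simp add: L2_set_right_distrib)
  finally show ?thesis .
qed

lemma fock_lin:
  assumes "f \<in> fock n" "g \<in> fock n"
  shows "(\<lambda>x. a * f x + b * g x) \<in> fock n"
    "fnorm (\<lambda>x. a * f x + b * g x) \<le> cmod a * fnorm f + cmod b * fnorm g"
proof -
  have *: "l2 F (\<lambda>x. a * f x + b * g x) \<le> cmod a * fnorm f + cmod b * fnorm g" if "finite F" for F
    using l2_lin[where F=F and a=a and f=f and b=b and g=g] l2_le_fnorm[OF fock_bdd[OF assms(1)] that] l2_le_fnorm[OF fock_bdd[OF assms(2)] that]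
    by (meson add_mono dual_order.trans mult_left_mono norm_ge_zero)
  show "(\<lambda>x. a * f x + b * g x) \<in> fock n"
    using fnorm_leI(1)[OF *] assms unfolding fock_def by auto
  show "fnorm (\<lambda>x. a * f x + b * g x) \<le> cmod a * fnorm f + cmod b * fnorm g"
    using fnorm_leI(2)[OF *] .
qed

lemma fock_scale: assumes "f \<in> fock n" shows "(\<lambda>x. a * f x) \<in> fock n"
  using fock_lin(1)[OF assms assms, where a=a and b=0] by simp

lemma fnorm_scale: assumes "f \<in> fock n" shows "fnorm (\<lambda>x. a * f x) = cmod a * fnorm f"
proof (cases "a = 0")
  case True thus ?thesis by simp
next
  case False
  have le1: "fnorm (\<lambda>x. a * f x) \<le> cmod a * fnorm f"
    using fock_lin(2)[OF assms assms, where a=a and b=0] by simp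
  have "(\<lambda>x. inverse a * (a * f x)) = f" using False by (simp add: field_simps)
  hence "fnorm f = fnorm (\<lambda>x. inverse a * (a * f x))" by simp
  also have "\<dots> \<le> cmod (inverse a) * fnorm (\<lambda>x. a * f x)"
    using fock_lin(2)[OF fock_scale[OF assms] fock_scale[OF assms], where a="inverse a" and b=0] by simp
  finally have fin: "fnorm f \<le> cmod (inverse a) * fnorm (\<lambda>x. a * f x)" .
  have "cmod a * fnorm f \<le> fnorm (\<lambda>x. a * f x)"
  proof -
    have "fnorm f \<le> fnorm (\<lambda>x. a * f x) / cmod a" using fin by (simp add: norm_inverse divide_inverse mult.commute)
    thus ?thesis using False by (simp add: pos_le_divide_eq mult.commute)
  qed
  with le1 show ?thesis by simp
qed



lemma bop_fock: "bop n T \<Longrightarrow> f \<in> fock n \<Longrightarrow> T f \<in> fock n"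
  unfolding bop_def by auto
lemma bop_out: "bop n T \<Longrightarrow> f \<notin> fock n \<Longrightarrow> T f = 0"
  unfolding bop_def by auto
lemma bop_lin: "bop n T \<Longrightarrow> f \<in> fock n \<Longrightarrow> g \<in> fock n \<Longrightarrow>
   T (\<lambda>w. a * f w + b * g w) = (\<lambda>w. a * T f w + b * T g w)"
  unfolding bop_def by auto
lemma bop_bound: "bop n T \<Longrightarrow> \<exists>C. \<forall>f\<in>fock n. fnorm (T f) \<le> C * fnorm f"
  unfolding bop_def by auto

lemma bop_zero: assumes "bop n T" shows "T (\<lambda>x. 0) = (\<lambda>x. 0)"
  using bop_lin[OF assms zero_fock zero_fock, where a=0 and b=0] by simp

lemma bop_zero': assumes "bop n T" shows "T 0 = 0"
  using bop_zero[OF assms] by (simp add: zero_fun_def)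

lemma bop_scale: assumes "bop n T" "f \<in> fock n" shows "T (\<lambda>x. a * f x) = (\<lambda>x. a * T f x)"
  using bop_lin[OF assms assms(2), where a=a and b=0] by simp

lemma opnorm_bdd: assumes "bop n T"
  shows "bdd_above ((\<lambda>f. fnorm (T f)) ` {f\<in>fock n. fnorm f \<le> 1})"
proof -
  obtain C where C: "\<forall>f\<in>fock n. fnorm (T f) \<le> C * fnorm f" using bop_bound[OF assms] by auto
  have "fnorm (T f) \<le> max C 0" if "f \<in> fock n" "fnorm f \<le> 1" for f
  proof -
    have "C * fnorm f \<le> max C 0" using that fnorm_nonneg[OF fock_bdd[OF that(1)]]
      by (cases "C \<ge> 0") (auto simp: mult_left_le mult_nonpos_nonneg intro: order_trans)
    thus ?thesis using C that by (meson order_trans)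
  qed
  thus ?thesis by (intro bdd_aboveI[where M="max C 0"]) auto
qed

lemma opnorm_upper: assumes "bop n T" "f \<in> fock n" "fnorm f \<le> 1" shows "fnorm (T f) \<le> opnorm n T"
  unfolding opnorm_def using assms opnorm_bdd[OF assms(1)] by (auto intro!: cSup_upper)

lemma opnorm_nonneg: assumes "bop n T" shows "0 \<le> opnorm n T"
  using opnorm_upper[OF assms zero_fock] bop_zero[OF assms] by simp

lemma opnorm_le: assumes "bop n T" "f \<in> fock n" shows "fnorm (T f) \<le> opnorm n T * fnorm f"
proof (cases "fnorm f = 0")
  case True
  hence "f = (\<lambda>x. 0)" using fnorm_eq0[OF fock_bdd[OF assms(2)]] by (simp add: zero_fun_def)
  thus ?thesis using bop_zero[OF assms(1)] True by simp
next
  case False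
  have fn0: "0 < fnorm f" using False fnorm_nonneg[OF fock_bdd[OF assms(2)]] by simp
  let ?g = "\<lambda>x. complex_of_real (1 / fnorm f) * f x"
  have g: "?g \<in> fock n" using fock_scale[OF assms(2)] .
  have "fnorm ?g = cmod (complex_of_real (1 / fnorm f)) * fnorm f" by (rule fnorm_scale[OF assms(2)])
  moreover have "cmod (complex_of_real (1 / fnorm f)) = 1 / fnorm f" using fn0 by (simp add: norm_divide)
  ultimately have "fnorm ?g = 1" using fn0 by simp
  hence "fnorm (T ?g) \<le> opnorm n T" using opnorm_upper[OF assms(1) g] by simp
  moreover have "T ?g = (\<lambda>x. complex_of_real (1 / fnorm f) * T f x)" by (rule bop_scale[OF assms])
  moreover have "fnorm (\<lambda>x. complex_of_real (1 / fnorm f) * T f x) = cmod (complex_of_real (1 / fnorm f)) * fnorm (T f)"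
    by (rule fnorm_scale[OF bop_fock[OF assms]])
  moreover have "cmod (complex_of_real (1 / fnorm f)) = 1 / fnorm f" using fn0 by (simp add: norm_divide)
  ultimately show ?thesis using fn0 by (simp add: pos_divide_le_eq)
qed

lemma opnorm_leI: assumes "\<And>f. f \<in> fock n \<Longrightarrow> fnorm (T f) \<le> M * fnorm f" "0 \<le> M"
  shows "opnorm n T \<le> M"
  unfolding opnorm_def
proof (rule cSup_least)
  have "(\<lambda>x. 0) \<in> {f \<in> fock n. fnorm f \<le> 1}" by simp
  thus "(\<lambda>f. fnorm (T f)) ` {f \<in> fock n. fnorm f \<le> 1} \<noteq> {}" by blast
  fix x assume "x \<in> (\<lambda>f. fnorm (T f)) ` {f \<in> fock n. fnorm f \<le> 1}"
  then obtain f where f: "f \<in> fock n" "fnorm f \<le> 1" "x = fnorm (T f)" by auto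
  have "M * fnorm f \<le> M" using f(2) assms(2) by (simp add: mult_left_le)
  thus "x \<le> M" using assms(1)[OF f(1)] f(3) by simp
qed

lemma lincomb_app: "lincomb a A b B f = (\<lambda>x. a * A f x + b * B f x)"
  unfolding lincomb_def by simp

lemma bop_lincomb: assumes "bop n A" "bop n B" shows "bop n (lincomb a A b B)"
  unfolding bop_def
proof (intro conjI ballI allI impI)
  show "lincomb a A b B ` fock n \<subseteq> fock n"
    using fock_lin(1)[OF bop_fock[OF assms(1)] bop_fock[OF assms(2)]] by (auto simp: lincomb_app)
  show "lincomb a A b B f = 0" if "f \<notin> fock n" for f
    using bop_out[OF assms(1) that] bop_out[OF assms(2) that] by (simp add: lincomb_app zero_fun_def)
  show "lincomb a A b B (\<lambda>w. c * f w + d * g w) = (\<lambda>w. c * lincomb a A b B f w + d * lincomb a A b B g w)"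
    if "f \<in> fock n" "g \<in> fock n" for f g c d
    using bop_lin[OF assms(1) that] bop_lin[OF assms(2) that]
    by (simp add: lincomb_app algebra_simps)
  show "\<exists>C. \<forall>f\<in>fock n. fnorm (lincomb a A b B f) \<le> C * fnorm f"
  proof (intro exI ballI)
    fix f assume f: "f \<in> fock n"
    have "fnorm (lincomb a A b B f) \<le> cmod a * fnorm (A f) + cmod b * fnorm (B f)"
      using fock_lin(2)[OF bop_fock[OF assms(1) f] bop_fock[OF assms(2) f]] by (simp add: lincomb_app)
    also have "\<dots> \<le> cmod a * (opnorm n A * fnorm f) + cmod b * (opnorm n B * fnorm f)"
      by (intro add_mono mult_left_mono opnorm_le assms f) auto
    finally show "fnorm (lincomb a A b B f) \<le> (cmod a * opnorm n A + cmod b * opnorm n B) * fnorm f"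
      by (simp add: algebra_simps)
  qed
qed

lemma opnorm_lincomb: assumes "bop n A" "bop n B"
  shows "opnorm n (lincomb a A b B) \<le> cmod a * opnorm n A + cmod b * opnorm n B"
proof -
  have nn: "0 \<le> cmod a * opnorm n A + cmod b * opnorm n B"
    using opnorm_nonneg[OF assms(1)] opnorm_nonneg[OF assms(2)] by simp
  show ?thesis
proof (rule opnorm_leI[OF _ nn])
  fix f assume f: "f \<in> fock n"
  have "fnorm (lincomb a A b B f) \<le> cmod a * fnorm (A f) + cmod b * fnorm (B f)"
    using fock_lin(2)[OF bop_fock[OF assms(1) f] bop_fock[OF assms(2) f]] by (simp add: lincomb_app)
  also have "\<dots> \<le> cmod a * (opnorm n A * fnorm f) + cmod b * (opnorm n B * fnorm f)"
    by (intro add_mono mult_left_mono opnorm_le assms f) auto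
  finally show "fnorm (lincomb a A b B f) \<le> (cmod a * opnorm n A + cmod b * opnorm n B) * fnorm f"
    by (simp add: algebra_simps)
qed
qed

lemma bop_comp: assumes "bop n A" "bop n B" shows "bop n (A \<circ> B)"
  unfolding bop_def
proof (intro conjI ballI allI impI)
  show "(A \<circ> B) ` fock n \<subseteq> fock n" using bop_fock assms by auto
  show "(A \<circ> B) f = 0" if "f \<notin> fock n" for f
    using bop_out[OF assms(2) that] bop_zero'[OF assms(1)] by simp
  show "(A \<circ> B) (\<lambda>w. c * f w + d * g w) = (\<lambda>w. c * (A \<circ> B) f w + d * (A \<circ> B) g w)"
    if "f \<in> fock n" "g \<in> fock n" for f g c d
    using bop_lin[OF assms(2) that] bop_lin[OF assms(1) bop_fock[OF assms(2) that(1)] bop_fock[OF assms(2) that(2)]]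
    by simp
  show "\<exists>C. \<forall>f\<in>fock n. fnorm ((A \<circ> B) f) \<le> C * fnorm f"
  proof (intro exI ballI)
    fix f assume f: "f \<in> fock n"
    have "fnorm ((A \<circ> B) f) \<le> opnorm n A * fnorm (B f)" using opnorm_le[OF assms(1) bop_fock[OF assms(2) f]] by simp
    also have "\<dots> \<le> opnorm n A * (opnorm n B * fnorm f)"
      by (intro mult_left_mono opnorm_le assms f opnorm_nonneg)
    finally show "fnorm ((A \<circ> B) f) \<le> (opnorm n A * opnorm n B) * fnorm f" by (simp add: algebra_simps)
  qed
qed

lemma opnorm_comp: assumes "bop n A" "bop n B" shows "opnorm n (A \<circ> B) \<le> opnorm n A * opnorm n B"
proof -
  have nn: "0 \<le> opnorm n A * opnorm n B" using opnorm_nonneg assms by simp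
  show ?thesis
proof (rule opnorm_leI[OF _ nn])
  fix f assume f: "f \<in> fock n"
  have "fnorm ((A \<circ> B) f) \<le> opnorm n A * fnorm (B f)" using opnorm_le[OF assms(1) bop_fock[OF assms(2) f]] by simp
  also have "\<dots> \<le> opnorm n A * (opnorm n B * fnorm f)"
    by (intro mult_left_mono opnorm_le assms f opnorm_nonneg)
  finally show "fnorm ((A \<circ> B) f) \<le> (opnorm n A * opnorm n B) * fnorm f" by (simp add: algebra_simps)
qed
qed

lemma opnorm_zero: "opnorm n (\<lambda>f. 0) = 0"
proof -
  have "bop n (\<lambda>f. 0)" unfolding bop_def zero_fun_def by (auto intro!: exI[of _ 0])
  moreover have "opnorm n (\<lambda>f. 0) \<le> 0" by (rule opnorm_leI) (auto simp: zero_fun_def)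
  ultimately show ?thesis using opnorm_nonneg by (metis order.antisym)
qed

lemma bop_zero_op: "bop n (\<lambda>f. 0)" unfolding bop_def zero_fun_def by (auto intro!: exI[of _ 0])

lemma diff_lincomb: "(\<lambda>f. T f - S f) = lincomb 1 T (-1) S"
  unfolding lincomb_def by (auto simp: fun_diff_def)



definition shiftw :: "nat list \<Rightarrow> fvec \<Rightarrow> fvec" where
  "shiftw u f = (\<lambda>x. if take (length u) x = u then f (drop (length u) x) else 0)"

lemma words_Cons: "i # u \<in> words n \<longleftrightarrow> i < n \<and> u \<in> words n"
  unfolding words_def by auto
lemma words_append: "u @ v \<in> words n \<longleftrightarrow> u \<in> words n \<and> v \<in> words n"
  unfolding words_def by auto
lemma words_Nil[simp]: "[] \<in> words n"
  unfolding words_def by auto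

lemma sum_zero_outside:
  assumes "finite F" "\<And>x. x \<in> F \<Longrightarrow> x \<notin> P \<Longrightarrow> g x = 0"
  shows "(\<Sum>x\<in>F. g x) = (\<Sum>x\<in>F \<inter> P. g x)"
  by (rule sum.mono_neutral_right) (use assms in auto)

lemma shiftw_fock:
  assumes u: "u \<in> words n" and f: "f \<in> fock n"
  shows "shiftw u f \<in> fock n" "fnorm (shiftw u f) \<le> fnorm f"
proof -
  let ?k = "length u"
  let ?P = "{x. take ?k x = u}"
  have inj: "inj_on (drop ?k) ?P"
    by (rule inj_onI) (metis append_take_drop_id mem_Collect_eq)
  have *: "l2 F (shiftw u f) \<le> fnorm f" if F: "finite F" for F
  proof -
    have "(\<Sum>x\<in>F. (cmod (shiftw u f x))^2) = (\<Sum>x\<in>F \<inter> ?P. (cmod (shiftw u f x))^2)"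
      by (rule sum_zero_outside[OF F]) (simp add: shiftw_def)
    also have "\<dots> = (\<Sum>x\<in>F \<inter> ?P. (cmod (f (drop ?k x)))^2)"
      by (rule sum.cong) (auto simp: shiftw_def)
    also have "\<dots> = (\<Sum>y\<in>drop ?k ` (F \<inter> ?P). (cmod (f y))^2)"
      by (rule sum.reindex[symmetric, unfolded comp_def]) (rule inj_on_subset[OF inj], auto)
    finally have "l2 F (shiftw u f) = l2 (drop ?k ` (F \<inter> ?P)) f" unfolding L2_set_def by simp
    also have "\<dots> \<le> fnorm f" by (rule l2_le_fnorm[OF fock_bdd[OF f]]) (use F in auto)
    finally show ?thesis .
  qed
  show "fnorm (shiftw u f) \<le> fnorm f" using fnorm_leI(2)[OF *] .
  have "shiftw u f w = 0" if "w \<notin> words n" for w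
  proof (cases "take ?k w = u")
    case True
    hence "w = u @ drop ?k w" by (metis append_take_drop_id)
    hence "drop ?k w \<notin> words n" using that u words_append by metis
    thus ?thesis using fock_vanish[OF f] by (simp add: shiftw_def)
  qed (simp add: shiftw_def)
  thus "shiftw u f \<in> fock n" using fnorm_leI(1)[OF *] unfolding fock_def by auto
qed

lemma shiftw_Nil[simp]: "shiftw [] f = f" unfolding shiftw_def by simp

lemma shiftw_append: "shiftw u (shiftw v f) = shiftw (u @ v) f"
proof (rule ext)
  fix x
  show "shiftw u (shiftw v f) x = shiftw (u @ v) f x"
  proof (cases "take (length u) x = u")
    case True
    then obtain y where x: "x = u @ y" by (metis append_take_drop_id)
    show ?thesis unfolding x shiftw_def by simp
  next
    case False
    have "take (length (u @ v)) x \<noteq> u @ v"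
    proof
      assume "take (length (u @ v)) x = u @ v"
      hence "take (length u) (take (length (u @ v)) x) = u" by simp
      thus False using False by (simp add: min_def)
    qed
    thus ?thesis using False by (simp add: shiftw_def)
  qed
qed

lemma shiftw_lin: "shiftw u (\<lambda>x. a * f x + b * g x) = (\<lambda>x. a * shiftw u f x + b * shiftw u g x)"
  unfolding shiftw_def by auto

lemma shiftw_sum: "shiftw u (\<lambda>y. \<Sum>v\<in>G. k v * h v y) = (\<lambda>x. \<Sum>v\<in>G. k v * shiftw u (h v) x)"
  unfolding shiftw_def by auto

lemma shiftw_zero[simp]: "shiftw u (\<lambda>x. 0) = (\<lambda>x. 0)" unfolding shiftw_def by auto

definition delta :: fvec where "delta = (\<lambda>x. if x = [] then 1 else 0)"

lemma shiftw_delta: "shiftw u delta = (\<lambda>x. if x = u then 1 else 0)"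
  unfolding shiftw_def delta_def
  by (auto intro!: ext)

lemma delta_fock: "delta \<in> fock n"
proof -
  have *: "l2 F delta \<le> 1" if "finite F" for F
  proof -
    have "(\<Sum>x\<in>F. (cmod (delta x))^2) = (\<Sum>x\<in>F \<inter> {[]}. (cmod (delta x))^2)"
      by (rule sum_zero_outside[OF that]) (auto simp: delta_def)
    also have "\<dots> \<le> 1" by (cases "[] \<in> F") (auto simp: delta_def Int_insert_right)
    finally show ?thesis unfolding L2_set_def by simp
  qed
  show ?thesis using fnorm_leI(1)[OF *] unfolding fock_def by (auto simp: delta_def)
qed

lemma Sop_fock_eq: "g \<in> fock n \<Longrightarrow> Sop n i g = shiftw [i] g"
  unfolding Sop_def shiftw_def by (auto intro!: ext split: list.split)

lemma Sop_zero: "Sop n i (\<lambda>x. 0) = (\<lambda>x. 0)"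
  using Sop_fock_eq[OF zero_fock] by simp

lemma Sword_Cons: "Sword n (i # u) = Sop n i \<circ> Sword n u"
  unfolding Sword_def by simp

lemma Sword_Nil: "Sword n [] = IdF n"
  unfolding Sword_def by simp

lemma Sword_eq: "u \<in> words n \<Longrightarrow> f \<in> fock n \<Longrightarrow> Sword n u f = shiftw u f"
proof (induction u)
  case Nil thus ?case by (simp add: Sword_Nil IdF_def)
next
  case (Cons i u)
  hence u: "u \<in> words n" using words_Cons by auto
  have "Sword n (i # u) f = Sop n i (shiftw u f)" using Cons u by (simp add: Sword_Cons)
  also have "\<dots> = shiftw [i] (shiftw u f)" by (rule Sop_fock_eq[OF shiftw_fock(1)[OF u Cons.prems(2)]])
  also have "\<dots> = shiftw (i # u) f" by (simp add: shiftw_append)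
  finally show ?case .
qed

lemma Sword_out: "f \<notin> fock n \<Longrightarrow> Sword n u f = (\<lambda>x. 0)"
proof (induction u)
  case Nil thus ?case by (simp add: Sword_Nil IdF_def zero_fun_def)
next
  case (Cons i u) thus ?case by (simp add: Sword_Cons Sop_zero)
qed

definition pol :: "nat \<Rightarrow> nat list set \<Rightarrow> (nat list \<Rightarrow> complex) \<Rightarrow> fop" where
  "pol n F c = (\<lambda>f x. \<Sum>w\<in>F. c w * Sword n w f x)"

lemma poly_ops_iff: "T \<in> poly_ops n \<longleftrightarrow> (\<exists>F c. finite F \<and> F \<subseteq> words n \<and> T = pol n F c)"
  unfolding poly_ops_def pol_def by auto

lemma pol_in: "finite F \<Longrightarrow> F \<subseteq> words n \<Longrightarrow> pol n F c \<in> poly_ops n"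
  unfolding poly_ops_iff by auto

lemma pol_fock_eq: "F \<subseteq> words n \<Longrightarrow> f \<in> fock n \<Longrightarrow> pol n F c f = (\<lambda>x. \<Sum>w\<in>F. c w * shiftw w f x)"
  unfolding pol_def by (auto intro!: ext sum.cong simp: Sword_eq)

lemma pol_out: "f \<notin> fock n \<Longrightarrow> pol n F c f = (\<lambda>x. 0)"
  unfolding pol_def by (simp add: Sword_out)

lemma fock_sum:
  assumes "finite F" "\<And>w. w \<in> F \<Longrightarrow> g w \<in> fock n"
  shows "(\<lambda>x. \<Sum>w\<in>F. c w * g w x) \<in> fock n \<and> fnorm (\<lambda>x. \<Sum>w\<in>F. c w * g w x) \<le> (\<Sum>w\<in>F. cmod (c w) * fnorm (g w))"
  using assms
proof (induction F rule: finite_induct)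
  case empty thus ?case by simp
next
  case (insert a F)
  have IH: "(\<lambda>x. \<Sum>w\<in>F. c w * g w x) \<in> fock n" "fnorm (\<lambda>x. \<Sum>w\<in>F. c w * g w x) \<le> (\<Sum>w\<in>F. cmod (c w) * fnorm (g w))"
    using insert by auto
  have ga: "g a \<in> fock n" using insert by auto
  have eq: "(\<lambda>x. \<Sum>w\<in>insert a F. c w * g w x) = (\<lambda>x. c a * g a x + 1 * (\<Sum>w\<in>F. c w * g w x))"
    using insert by simp
  show ?case unfolding eq
    using fock_lin[OF ga IH(1), where a="c a" and b=1] IH(2) insert by simp
qed

lemma bop_pol: assumes "F \<subseteq> words n" "finite F" shows "bop n (pol n F c)"
  unfolding bop_def
proof (intro conjI ballI allI impI)
  show "pol n F c ` fock n \<subseteq> fock n"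
  proof
    fix g assume "g \<in> pol n F c ` fock n"
    then obtain f where f: "f \<in> fock n" "g = pol n F c f" by auto
    have "\<And>w. w \<in> F \<Longrightarrow> shiftw w f \<in> fock n" using shiftw_fock(1) assms(1) f(1) by auto
    from fock_sum[OF assms(2), where g="\<lambda>w. shiftw w f" and c=c, OF this]
    show "g \<in> fock n" unfolding f(2) pol_fock_eq[OF assms(1) f(1)] by simp
  qed
  show "pol n F c f = 0" if "f \<notin> fock n" for f using pol_out[OF that] by (simp add: zero_fun_def)
  show "pol n F c (\<lambda>w. a * f w + b * g w) = (\<lambda>w. a * pol n F c f w + b * pol n F c g w)"
    if "f \<in> fock n" "g \<in> fock n" for f g a b
    using that fock_lin(1)[OF that] assms(1)
    by (simp add: pol_fock_eq shiftw_lin sum_distrib_left sum.distrib algebra_simps)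
  show "\<exists>C. \<forall>f\<in>fock n. fnorm (pol n F c f) \<le> C * fnorm f"
  proof (intro exI ballI)
    fix f assume f: "f \<in> fock n"
    have "fnorm (pol n F c f) \<le> (\<Sum>w\<in>F. cmod (c w) * fnorm (shiftw w f))"
      unfolding pol_fock_eq[OF assms(1) f]
    proof -
      have "\<And>w. w \<in> F \<Longrightarrow> shiftw w f \<in> fock n" using shiftw_fock(1) assms(1) f by auto
      from fock_sum[OF assms(2), where g="\<lambda>w. shiftw w f" and c=c, OF this]
      show "fnorm (\<lambda>x. \<Sum>w\<in>F. c w * shiftw w f x) \<le> (\<Sum>w\<in>F. cmod (c w) * fnorm (shiftw w f))" by simp
    qed
    also have "\<dots> \<le> (\<Sum>w\<in>F. cmod (c w) * fnorm f)"
      using assms(1) f by (intro sum_mono mult_left_mono shiftw_fock(2)) auto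
    finally show "fnorm (pol n F c f) \<le> (\<Sum>w\<in>F. cmod (c w)) * fnorm f"
      by (simp add: sum_distrib_right)
  qed
qed

lemma bop_poly: "T \<in> poly_ops n \<Longrightarrow> bop n T"
  using bop_pol unfolding poly_ops_iff by auto

definition ext :: "nat list set \<Rightarrow> (nat list \<Rightarrow> complex) \<Rightarrow> nat list \<Rightarrow> complex" where
  "ext F c x = (if x \<in> F then c x else 0)"

lemma sum_ext: "finite G \<Longrightarrow> F \<subseteq> G \<Longrightarrow> (\<Sum>w\<in>G. ext F c w * h w) = (\<Sum>w\<in>F. c w * h w)"
  unfolding ext_def by (rule sum.mono_neutral_cong_right) auto

lemma pol_lincomb:
  assumes "finite F" "finite G"
  shows "lincomb a (pol n F c) b (pol n G d) = pol n (F \<union> G) (\<lambda>x. a * ext F c x + b * ext G d x)"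
proof -
  have "(\<Sum>w\<in>F \<union> G. (a * ext F c w + b * ext G d w) * S w) = a * (\<Sum>w\<in>F. c w * S w) + b * (\<Sum>w\<in>G. d w * S w)" for S
  proof -
    have "(\<Sum>w\<in>F \<union> G. (a * ext F c w + b * ext G d w) * S w) = a * (\<Sum>w\<in>F \<union> G. ext F c w * S w) + b * (\<Sum>w\<in>F \<union> G. ext G d w * S w)"
      by (simp add: algebra_simps sum.distrib sum_distrib_left)
    also have "\<dots> = a * (\<Sum>w\<in>F. c w * S w) + b * (\<Sum>w\<in>G. d w * S w)"
      using assms by (simp add: sum_ext)
    finally show ?thesis .
  qed
  thus ?thesis unfolding lincomb_def pol_def by simp
qed

lemma poly_lincomb: "p \<in> poly_ops n \<Longrightarrow> q \<in> poly_ops n \<Longrightarrow> lincomb a p b q \<in> poly_ops n"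
  unfolding poly_ops_iff by (metis finite_UnI le_sup_iff pol_lincomb)

definition keyset where "keyset F G x = {p \<in> F \<times> G. fst p @ snd p = x}"

lemma pol_comp:
  assumes F: "finite F" "F \<subseteq> words n" and G: "finite G" "G \<subseteq> words n"
  shows "pol n F c \<circ> pol n G d = pol n ((\<lambda>p. fst p @ snd p) ` (F \<times> G))
      (\<lambda>x. \<Sum>p\<in>keyset F G x. c (fst p) * d (snd p))"
proof (rule ext)
  fix f
  let ?H = "(\<lambda>p. fst p @ snd p) ` (F \<times> G)"
  have H: "?H \<subseteq> words n" using F G by (auto simp: words_append)
  show "(pol n F c \<circ> pol n G d) f = pol n ?H (\<lambda>x. \<Sum>p\<in>keyset F G x. c (fst p) * d (snd p)) f"
  proof (cases "f \<in> fock n")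
    case False
    thus ?thesis by (simp add: pol_out pol_fock_eq[OF F(2)])
  next
    case True
    have pf: "pol n G d f \<in> fock n" using bop_fock[OF bop_pol[OF G(2) G(1)] True] .
    show ?thesis
    proof (rule ext)
      fix x
      have "(pol n F c \<circ> pol n G d) f x = (\<Sum>u\<in>F. c u * shiftw u (\<lambda>y. \<Sum>v\<in>G. d v * shiftw v f y) x)"
        using pol_fock_eq[OF F(2) pf] pol_fock_eq[OF G(2) True] by simp
      also have "\<dots> = (\<Sum>u\<in>F. \<Sum>v\<in>G. c u * d v * shiftw (u @ v) f x)"
        by (simp add: shiftw_sum shiftw_append sum_distrib_left mult.assoc)
      also have "\<dots> = (\<Sum>p\<in>F \<times> G. c (fst p) * d (snd p) * shiftw (fst p @ snd p) f x)"
        by (simp add: sum.cartesian_product case_prod_beta)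
      also have "\<dots> = (\<Sum>y\<in>?H. \<Sum>p\<in>keyset F G y. c (fst p) * d (snd p) * shiftw (fst p @ snd p) f x)"
        unfolding keyset_def using F G by (intro sum.image_gen) auto
      also have "\<dots> = (\<Sum>y\<in>?H. (\<Sum>p\<in>keyset F G y. c (fst p) * d (snd p)) * shiftw y f x)"
        by (intro sum.cong refl) (auto simp: keyset_def sum_distrib_right)
      also have "\<dots> = pol n ?H (\<lambda>x. \<Sum>p\<in>keyset F G x. c (fst p) * d (snd p)) f x"
        using pol_fock_eq[OF H True] by simp
      finally show "(pol n F c \<circ> pol n G d) f x = pol n ?H (\<lambda>x. \<Sum>p\<in>keyset F G x. c (fst p) * d (snd p)) f x" .
    qed
  qed
qed

lemma poly_comp: "p \<in> poly_ops n \<Longrightarrow> q \<in> poly_ops n \<Longrightarrow> p \<circ> q \<in> poly_ops n"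
proof -
  assume "p \<in> poly_ops n" "q \<in> poly_ops n"
  then obtain F c G d where F: "finite F" "F \<subseteq> words n" "p = pol n F c"
    and G: "finite G" "G \<subseteq> words n" "q = pol n G d" unfolding poly_ops_iff by auto
  show ?thesis unfolding F(3) G(3) pol_comp[OF F(1,2) G(1,2)]
    by (rule pol_in) (use F G in \<open>auto simp: words_append\<close>)
qed

lemma pol_single: "pol n {u} (\<lambda>_. 1) = Sword n u"
  unfolding pol_def by auto

lemma Sword_poly: "u \<in> words n \<Longrightarrow> Sword n u \<in> poly_ops n"
  using pol_in[of "{u}" n "\<lambda>_. 1"] pol_single by simp

lemma IdF_poly: "IdF n \<in> poly_ops n"
  using Sword_poly[of "[]" n] by (simp add: Sword_Nil)

lemma Sop_Sword: "Sop n i = Sword n [i]"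
proof (rule ext)
  fix f
  show "Sop n i f = Sword n [i] f"
    by (cases "f \<in> fock n") (auto simp: Sword_Cons Sword_Nil IdF_def Sop_def zero_fun_def split: list.split)
qed

lemma Sop_poly: "i < n \<Longrightarrow> Sop n i \<in> poly_ops n"
  using Sword_poly[of "[i]" n] by (simp add: Sop_Sword words_Cons)

subsection \<open>Evaluation\<close>

definition wp :: "(nat \<Rightarrow> complex) \<Rightarrow> nat list \<Rightarrow> complex" where
  "wp w u = prod_list (map w u)"

lemma wp_append: "wp w (u @ v) = wp w u * wp w v" unfolding wp_def by simp

definition ev :: "(nat \<Rightarrow> complex) \<Rightarrow> fop \<Rightarrow> complex" where
  "ev w T = (\<Sum>x\<in>{x. T delta x \<noteq> 0}. T delta x * wp w x)"

lemma pol_delta: assumes "finite F" "F \<subseteq> words n"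
  shows "pol n F c delta x = (if x \<in> F then c x else 0)"
proof -
  have "pol n F c delta x = (\<Sum>w\<in>F. c w * (if x = w then 1 else 0))"
    using pol_fock_eq[OF assms(2) delta_fock] by (simp add: shiftw_delta)
  also have "\<dots> = (\<Sum>w\<in>F. if x = w then c w else 0)" by (rule sum.cong) auto
  also have "\<dots> = (if x \<in> F then c x else 0)"
    using assms(1) by (simp add: sum.delta)
  finally show ?thesis .
qed

lemma ev_pol: assumes "finite F" "F \<subseteq> words n" shows "ev w (pol n F c) = (\<Sum>u\<in>F. c u * wp w u)"
proof -
  have S: "{x. pol n F c delta x \<noteq> 0} = {x \<in> F. c x \<noteq> 0}" using pol_delta[OF assms] by auto
  have "ev w (pol n F c) = (\<Sum>x\<in>{x \<in> F. c x \<noteq> 0}. c x * wp w x)"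
    unfolding ev_def S by (intro sum.cong refl) (auto simp: pol_delta[OF assms])
  also have "\<dots> = (\<Sum>u\<in>F. c u * wp w u)"
    by (rule sum.mono_neutral_left) (use assms in auto)
  finally show ?thesis .
qed

lemma ev_lincomb: "p \<in> poly_ops n \<Longrightarrow> q \<in> poly_ops n \<Longrightarrow> ev w (lincomb a p b q) = a * ev w p + b * ev w q"
proof -
  assume "p \<in> poly_ops n" "q \<in> poly_ops n"
  then obtain F c G d where F: "finite F" "F \<subseteq> words n" "p = pol n F c"
    and G: "finite G" "G \<subseteq> words n" "q = pol n G d" unfolding poly_ops_iff by auto
  have "ev w (lincomb a p b q) = (\<Sum>u\<in>F \<union> G. (a * ext F c u + b * ext G d u) * wp w u)"
    unfolding F(3) G(3) pol_lincomb[OF F(1) G(1)] using F G by (subst ev_pol) auto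
  also have "\<dots> = a * (\<Sum>u\<in>F \<union> G. ext F c u * wp w u) + b * (\<Sum>u\<in>F \<union> G. ext G d u * wp w u)"
    by (simp add: algebra_simps sum.distrib sum_distrib_left)
  also have "\<dots> = a * ev w p + b * ev w q"
    using F G by (simp add: sum_ext ev_pol)
  finally show ?thesis .
qed

lemma ev_comp: "p \<in> poly_ops n \<Longrightarrow> q \<in> poly_ops n \<Longrightarrow> ev w (p \<circ> q) = ev w p * ev w q"
proof -
  assume "p \<in> poly_ops n" "q \<in> poly_ops n"
  then obtain F c G d where F: "finite F" "F \<subseteq> words n" "p = pol n F c"
    and G: "finite G" "G \<subseteq> words n" "q = pol n G d" unfolding poly_ops_iff by auto
  let ?H = "(\<lambda>p. fst p @ snd p) ` (F \<times> G)"
  have H: "finite ?H" "?H \<subseteq> words n" using F G by (auto simp: words_append)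
  have "ev w (p \<circ> q) = (\<Sum>y\<in>?H. (\<Sum>p\<in>keyset F G y. c (fst p) * d (snd p)) * wp w y)"
    unfolding F(3) G(3) pol_comp[OF F(1,2) G(1,2)] by (rule ev_pol[OF H])
  also have "\<dots> = (\<Sum>y\<in>?H. \<Sum>p\<in>keyset F G y. c (fst p) * d (snd p) * wp w (fst p @ snd p))"
    by (intro sum.cong refl) (auto simp: keyset_def sum_distrib_right)
  also have "\<dots> = (\<Sum>p\<in>F \<times> G. c (fst p) * d (snd p) * wp w (fst p @ snd p))"
    unfolding keyset_def using F G by (intro sum.image_gen[symmetric]) auto
  also have "\<dots> = (\<Sum>u\<in>F. \<Sum>v\<in>G. (c u * wp w u) * (d v * wp w v))"
    by (simp add: sum.cartesian_product case_prod_beta wp_append algebra_simps)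
  also have "\<dots> = ev w p * ev w q"
    using F G by (simp add: ev_pol sum_product)
  finally show ?thesis .
qed

lemma ev_Sword: "u \<in> words n \<Longrightarrow> ev w (Sword n u) = wp w u"
  using ev_pol[of "{u}" n w "\<lambda>_. 1"] pol_single by simp



definition approx :: "nat \<Rightarrow> fop \<Rightarrow> (nat \<Rightarrow> fop) \<Rightarrow> bool" where
  "approx n A p \<longleftrightarrow> (\<forall>m. p m \<in> poly_ops n) \<and> (\<lambda>m. opnorm n (lincomb 1 A (-1) (p m))) \<longlonglongrightarrow> 0"

lemma squeeze0: assumes "\<And>m. 0 \<le> a m" "\<And>m. a m \<le> b m" "b \<longlonglongrightarrow> 0" shows "a \<longlonglongrightarrow> (0::real)"
  by (rule tendsto_sandwich[of "\<lambda>_. 0" a sequentially b]) (use assms in auto)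

lemma discalg_def2: "A \<in> discalg n \<longleftrightarrow> bop n A \<and> (\<forall>e>0. \<exists>p\<in>poly_ops n. opnorm n (lincomb 1 A (-1) p) < e)"
proof -
  have "\<And>p. (\<lambda>f. A f - p f) = lincomb 1 A (-1) p" by (rule diff_lincomb)
  thus ?thesis unfolding discalg_def by simp
qed

lemma discalg_iff: "A \<in> discalg n \<longleftrightarrow> bop n A \<and> (\<exists>p. approx n A p)"
proof
  assume A: "A \<in> discalg n"
  hence bA: "bop n A" unfolding discalg_def by auto
  have "\<forall>m. \<exists>p\<in>poly_ops n. opnorm n (lincomb 1 A (-1) p) < inverse (real (Suc m))"
    using A unfolding discalg_def2 by auto
  then obtain p where p: "\<And>m. p m \<in> poly_ops n" "\<And>m. opnorm n (lincomb 1 A (-1) (p m)) < inverse (real (Suc m))"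
    by metis
  have "(\<lambda>m. opnorm n (lincomb 1 A (-1) (p m))) \<longlonglongrightarrow> 0"
    by (rule squeeze0[OF opnorm_nonneg[OF bop_lincomb[OF bA bop_poly[OF p(1)]]] less_imp_le[OF p(2)] LIMSEQ_inverse_real_of_nat])
  thus "bop n A \<and> (\<exists>p. approx n A p)" using bA p unfolding approx_def by auto
next
  assume "bop n A \<and> (\<exists>p. approx n A p)"
  then obtain p where bA: "bop n A" and p: "approx n A p" by auto
  show "A \<in> discalg n" unfolding discalg_def2
  proof (intro conjI allI impI bA)
    fix e :: real assume e: "e > 0"
    from p have "eventually (\<lambda>m. opnorm n (lincomb 1 A (-1) (p m)) < e) sequentially"
      unfolding approx_def using e by (auto dest: order_tendstoD(2))
    then obtain m where "opnorm n (lincomb 1 A (-1) (p m)) < e" by (auto dest: eventually_happens)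
    thus "\<exists>q\<in>poly_ops n. opnorm n (lincomb 1 A (-1) q) < e" using p unfolding approx_def by auto
  qed
qed

lemma lincomb_self: "lincomb 1 p (-1) p = (\<lambda>f. 0)"
  unfolding lincomb_def by (auto simp: zero_fun_def)

lemma poly_discalg: "p \<in> poly_ops n \<Longrightarrow> p \<in> discalg n"
  unfolding discalg_iff approx_def
  by (auto intro!: exI[of _ "\<lambda>_. p"] bop_poly simp: lincomb_self opnorm_zero)

lemma discalg_bop: "A \<in> discalg n \<Longrightarrow> bop n A"
  unfolding discalg_def by auto

lemma approx_bound: "approx n A p \<Longrightarrow> (\<lambda>m. opnorm n (lincomb 1 A (-1) (p m))) \<longlonglongrightarrow> 0"
  unfolding approx_def by auto
lemma approx_poly: "approx n A p \<Longrightarrow> p m \<in> poly_ops n"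
  unfolding approx_def by auto

lemma lincomb_diff_lincomb:
  "lincomb 1 (lincomb a A b B) (-1) (lincomb a P b Q) = lincomb a (lincomb 1 A (-1) P) b (lincomb 1 B (-1) Q)"
  unfolding lincomb_def by (auto simp: algebra_simps)

lemma approx_lincomb:
  assumes A: "A \<in> discalg n" "approx n A p" and B: "B \<in> discalg n" "approx n B q"
  shows "approx n (lincomb a A b B) (\<lambda>m. lincomb a (p m) b (q m))"
  unfolding approx_def
proof
  show "\<forall>m. lincomb a (p m) b (q m) \<in> poly_ops n" using approx_poly A B poly_lincomb by blast
  let ?x = "\<lambda>m. opnorm n (lincomb 1 A (-1) (p m))" and ?y = "\<lambda>m. opnorm n (lincomb 1 B (-1) (q m))"
  have bx: "bop n (lincomb 1 A (-1) (p m))" for m using A by (intro bop_lincomb discalg_bop bop_poly approx_poly)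
  have by': "bop n (lincomb 1 B (-1) (q m))" for m using B by (intro bop_lincomb discalg_bop bop_poly approx_poly)
  show "(\<lambda>m. opnorm n (lincomb 1 (lincomb a A b B) (-1) (lincomb a (p m) b (q m)))) \<longlonglongrightarrow> 0"
  proof (rule squeeze0)
    fix m
    show "0 \<le> opnorm n (lincomb 1 (lincomb a A b B) (- 1) (lincomb a (p m) b (q m)))"
      unfolding lincomb_diff_lincomb by (intro opnorm_nonneg bop_lincomb bx by')
    show "opnorm n (lincomb 1 (lincomb a A b B) (- 1) (lincomb a (p m) b (q m))) \<le> cmod a * ?x m + cmod b * ?y m"
      unfolding lincomb_diff_lincomb by (intro opnorm_lincomb bx by')
  next
    show "(\<lambda>m. cmod a * ?x m + cmod b * ?y m) \<longlonglongrightarrow> 0"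
      using tendsto_add[OF tendsto_mult_right_zero[OF approx_bound[OF A(2)]] tendsto_mult_right_zero[OF approx_bound[OF B(2)]]]
      by simp
  qed
qed

lemma discalg_lincomb: "A \<in> discalg n \<Longrightarrow> B \<in> discalg n \<Longrightarrow> lincomb a A b B \<in> discalg n"
  using approx_lincomb discalg_iff bop_lincomb by meson

lemma comp_diff:
  assumes "bop n A" "bop n B" "bop n P" "bop n Q"
  shows "lincomb 1 (A \<circ> B) (-1) (P \<circ> Q) = lincomb 1 (A \<circ> lincomb 1 B (-1) Q) 1 (lincomb 1 A (-1) P \<circ> Q)"
proof (rule ext)
  fix f
  show "lincomb 1 (A \<circ> B) (-1) (P \<circ> Q) f = lincomb 1 (A \<circ> lincomb 1 B (-1) Q) 1 (lincomb 1 A (-1) P \<circ> Q) f"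
  proof (cases "f \<in> fock n")
    case True
    have "A (lincomb 1 B (-1) Q f) = (\<lambda>x. 1 * A (B f) x + (-1) * A (Q f) x)"
      unfolding lincomb_app by (rule bop_lin[OF assms(1) bop_fock[OF assms(2) True] bop_fock[OF assms(4) True]])
    thus ?thesis by (simp add: lincomb_app)
  next
    case False
    thus ?thesis using assms by (simp add: lincomb_app bop_out bop_zero' zero_fun_def bop_zero)
  qed
qed

lemma approx_comp:
  assumes A: "A \<in> discalg n" "approx n A p" and B: "B \<in> discalg n" "approx n B q"
  shows "approx n (A \<circ> B) (\<lambda>m. p m \<circ> q m)"
  unfolding approx_def
proof
  show "\<forall>m. p m \<circ> q m \<in> poly_ops n" using approx_poly A B poly_comp by blast
  let ?x = "\<lambda>m. opnorm n (lincomb 1 A (-1) (p m))" and ?y = "\<lambda>m. opnorm n (lincomb 1 B (-1) (q m))"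
  have bA: "bop n A" and bB: "bop n B" using A B discalg_bop by auto
  have bp: "bop n (p m)" and bq: "bop n (q m)" for m using A B approx_poly bop_poly by auto
  have bx: "bop n (lincomb 1 A (-1) (p m))" for m using bA bp by (intro bop_lincomb)
  have by': "bop n (lincomb 1 B (-1) (q m))" for m using bB bq by (intro bop_lincomb)
  have qb: "opnorm n (q m) \<le> opnorm n B + ?y m" for m
  proof -
    have "q m = lincomb 1 B (-1) (lincomb 1 B (-1) (q m))" unfolding lincomb_def by auto
    hence "opnorm n (q m) \<le> cmod 1 * opnorm n B + cmod (-1) * ?y m"
      using opnorm_lincomb[OF bB by'[of m], of 1 "-1"] by simp
    thus ?thesis by simp
  qed
  show "(\<lambda>m. opnorm n (lincomb 1 (A \<circ> B) (-1) (p m \<circ> q m))) \<longlonglongrightarrow> 0"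
  proof (rule squeeze0)
    fix m
    show "0 \<le> opnorm n (lincomb 1 (A \<circ> B) (-1) (p m \<circ> q m))"
      by (intro opnorm_nonneg bop_lincomb bop_comp bA bB bp bq)
    have "opnorm n (lincomb 1 (A \<circ> B) (-1) (p m \<circ> q m))
        \<le> cmod 1 * opnorm n (A \<circ> lincomb 1 B (-1) (q m)) + cmod 1 * opnorm n (lincomb 1 A (-1) (p m) \<circ> q m)"
      unfolding comp_diff[OF bA bB bp bq] by (intro opnorm_lincomb bop_comp bA bB bp bq bx by')
    also have "\<dots> \<le> opnorm n A * ?y m + ?x m * (opnorm n B + ?y m)"
    proof -
      have "opnorm n (A \<circ> lincomb 1 B (-1) (q m)) \<le> opnorm n A * ?y m" by (rule opnorm_comp[OF bA by'])
      moreover have "opnorm n (lincomb 1 A (-1) (p m) \<circ> q m) \<le> ?x m * opnorm n (q m)" by (rule opnorm_comp[OF bx bq])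
      moreover have "?x m * opnorm n (q m) \<le> ?x m * (opnorm n B + ?y m)"
        by (rule mult_left_mono[OF qb opnorm_nonneg[OF bx]])
      ultimately show ?thesis by simp
    qed
    finally show "opnorm n (lincomb 1 (A \<circ> B) (-1) (p m \<circ> q m)) \<le> opnorm n A * ?y m + ?x m * (opnorm n B + ?y m)" .
  next
    have "(\<lambda>m. opnorm n A * ?y m + ?x m * (opnorm n B + ?y m)) \<longlonglongrightarrow> opnorm n A * 0 + 0 * (opnorm n B + 0)"
      by (intro tendsto_intros approx_bound A B)
    thus "(\<lambda>m. opnorm n A * ?y m + ?x m * (opnorm n B + ?y m)) \<longlonglongrightarrow> 0" by simp
  qed
qed

lemma discalg_comp: "A \<in> discalg n \<Longrightarrow> B \<in> discalg n \<Longrightarrow> A \<circ> B \<in> discalg n"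
  using approx_comp discalg_iff bop_comp by meson

lemma IdF_discalg: "IdF n \<in> discalg n" using poly_discalg IdF_poly by auto
lemma Sop_discalg: "i < n \<Longrightarrow> Sop n i \<in> discalg n" using poly_discalg Sop_poly by auto
lemma Sword_discalg: "u \<in> words n \<Longrightarrow> Sword n u \<in> discalg n" using poly_discalg Sword_poly by auto

lemma zero_discalg: "(\<lambda>f. 0) \<in> discalg n"
proof -
  have "(\<lambda>f. 0) = lincomb 0 (IdF n) 0 (IdF n)" unfolding lincomb_def by (auto simp: zero_fun_def)
  thus ?thesis using discalg_lincomb IdF_discalg by metis
qed

lemma zero_discalg'[simp]: "0 \<in> discalg n"
proof -
  have "(0::fop) = (\<lambda>f. 0)" by (rule zero_fun_def)
  thus ?thesis using zero_discalg by metis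
qed



definition Wn :: "nat \<Rightarrow> nat \<Rightarrow> nat list set" where
  "Wn n N = {x \<in> words n. length x \<le> N}"

lemma finite_Wn: "finite (Wn n N)"
proof -
  have "Wn n N = {xs. set xs \<subseteq> {..<n} \<and> length xs \<le> N}" unfolding Wn_def words_def by auto
  thus ?thesis using finite_lists_length_le[of "{..<n}" N] by simp
qed

lemma Wn_0: "Wn n 0 = {[]}" unfolding Wn_def by auto

lemma Wn_Suc: "Wn n (Suc N) = insert [] ((\<lambda>p. fst p # snd p) ` ({..<n} \<times> Wn n N))"
proof (rule set_eqI)
  fix x show "x \<in> Wn n (Suc N) \<longleftrightarrow> x \<in> insert [] ((\<lambda>p. fst p # snd p) ` ({..<n} \<times> Wn n N))"
  proof (cases x)
    case Nil thus ?thesis by (simp add: Wn_def)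
  next
    case (Cons i v)
    have "x \<in> Wn n (Suc N) \<longleftrightarrow> i < n \<and> v \<in> Wn n N" using Cons by (auto simp: Wn_def words_Cons)
    also have "\<dots> \<longleftrightarrow> x \<in> insert [] ((\<lambda>p. fst p # snd p) ` ({..<n} \<times> Wn n N))"
      using Cons by (auto simp: image_iff)
    finally show ?thesis .
  qed
qed

definition sW :: "nat \<Rightarrow> (nat \<Rightarrow> complex) \<Rightarrow> nat \<Rightarrow> real" where
  "sW n w N = (\<Sum>v\<in>Wn n N. (cmod (wp w v))^2)"

definition rr :: "nat \<Rightarrow> (nat \<Rightarrow> complex) \<Rightarrow> real" where
  "rr n w = (\<Sum>i<n. (cmod (w i))^2)"

lemma sW_Suc: "sW n w (Suc N) = 1 + rr n w * sW n w N"
proof -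
  have inj: "inj_on (\<lambda>p. fst p # snd p) ({..<n} \<times> Wn n N)" by (auto intro: inj_onI)
  have "sW n w (Suc N) = 1 + (\<Sum>v\<in>(\<lambda>p. fst p # snd p) ` ({..<n} \<times> Wn n N). (cmod (wp w v))^2)"
    unfolding sW_def Wn_Suc using finite_Wn by (subst sum.insert) (auto simp: wp_def)
  also have "(\<Sum>v\<in>(\<lambda>p. fst p # snd p) ` ({..<n} \<times> Wn n N). (cmod (wp w v))^2)
      = (\<Sum>p\<in>{..<n} \<times> Wn n N. (cmod (wp w (fst p # snd p)))^2)"
    by (subst sum.reindex[OF inj]) simp
  also have "\<dots> = (\<Sum>i<n. \<Sum>v\<in>Wn n N. (cmod (w i))^2 * (cmod (wp w v))^2)"
    by (simp add: sum.cartesian_product case_prod_beta wp_def norm_mult power_mult_distrib)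
  also have "\<dots> = rr n w * sW n w N"
    unfolding rr_def sW_def by (simp add: sum_distrib_left sum_distrib_right) (subst sum.swap, rule refl)
  finally show ?thesis .
qed

lemma sW_formula: "sW n w N = (\<Sum>m\<le>N. (rr n w)^m)"
proof (induction N)
  case 0 thus ?case by (simp add: sW_def Wn_0 wp_def)
next
  case (Suc N)
  have "(\<Sum>m\<le>Suc N. (rr n w)^m) = 1 + (\<Sum>m\<le>N. (rr n w)^(Suc m))"
    by (subst sum.atMost_Suc_shift) simp
  also have "\<dots> = 1 + rr n w * (\<Sum>m\<le>N. (rr n w)^m)" by (simp add: sum_distrib_left)
  finally show ?case using Suc by (simp add: sW_Suc)
qed

lemma geo_lower: assumes "0 \<le> r" "r \<le> (1::real)" shows "real (M + 1) * r^M \<le> (\<Sum>m\<le>M. r^m)"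
proof -
  have "(\<Sum>m\<le>M. r^M) \<le> (\<Sum>m\<le>M. r^m)" by (intro sum_mono power_decreasing) (use assms in auto)
  thus ?thesis by simp
qed

lemma geo_tail: assumes "0 \<le> r" "r \<le> (1::real)"
  shows "(\<Sum>m\<le>M + d. r^m) - (\<Sum>m\<le>M. r^m) \<le> real d * r^M" "0 \<le> (\<Sum>m\<le>M + d. r^m) - (\<Sum>m\<le>M. r^m)"
proof -
  have "(\<Sum>m\<le>M + d. r^m) - (\<Sum>m\<le>M. r^m) \<le> real d * r^M \<and> 0 \<le> (\<Sum>m\<le>M + d. r^m) - (\<Sum>m\<le>M. r^m)"
  proof (induction d)
    case 0 thus ?case by simp
  next
    case (Suc d)
    have "r^(Suc (M + d)) \<le> r^M" by (rule power_decreasing) (use assms in auto)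
    moreover have "0 \<le> r^(Suc (M + d))" using assms by simp
    ultimately show ?case using Suc by (simp add: algebra_simps)
  qed
  thus "(\<Sum>m\<le>M + d. r^m) - (\<Sum>m\<le>M. r^m) \<le> real d * r^M" "0 \<le> (\<Sum>m\<le>M + d. r^m) - (\<Sum>m\<le>M. r^m)" by auto
qed

lemma cheb: assumes "0 \<le> r" "r \<le> (1::real)"
  shows "real (M + d + 1) * ((\<Sum>m\<le>M + d. r^m) - (\<Sum>m\<le>M. r^m)) \<le> real d * (\<Sum>m\<le>M + d. r^m)"
proof -
  let ?T = "(\<Sum>m\<le>M + d. r^m) - (\<Sum>m\<le>M. r^m)" and ?S = "\<Sum>m\<le>M. r^m"
  have T: "?T \<le> real d * r^M" "0 \<le> ?T" using geo_tail[OF assms] by auto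
  have "real (M + 1) * ?T \<le> real (M + 1) * (real d * r^M)" using T by (intro mult_left_mono) auto
  also have "\<dots> = real d * (real (M + 1) * r^M)" by simp
  also have "\<dots> \<le> real d * ?S" by (intro mult_left_mono geo_lower assms) auto
  finally have "real (M + 1) * ?T \<le> real d * ?S" .
  hence "real (M + d + 1) * ?T \<le> real d * ?S + real d * ?T" by (simp add: algebra_simps)
  thus ?thesis by (simp add: algebra_simps)
qed

lemma cballN_rr: "w \<in> cballN n \<Longrightarrow> 0 \<le> rr n w \<and> rr n w \<le> 1"
  unfolding cballN_def rr_def by (auto intro: sum_nonneg)

lemma cballN_coord: assumes "w \<in> cballN n" shows "cmod (w i) \<le> 1"
proof (cases "i < n")
  case True
  have "(cmod (w i))^2 \<le> (\<Sum>j<n. (cmod (w j))^2)"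
    using True by (intro member_le_sum) auto
  also have "\<dots> \<le> 1" using assms unfolding cballN_def by auto
  finally show ?thesis by (simp add: power_le_one_iff abs_le_square_iff[symmetric])
next
  case False thus ?thesis using assms unfolding cballN_def by auto
qed

lemma wp_le1: "w \<in> cballN n \<Longrightarrow> cmod (wp w u) \<le> 1"
  unfolding wp_def
proof (induction u)
  case Nil thus ?case by simp
next
  case (Cons i u)
  have "cmod (w i * prod_list (map w u)) \<le> 1 * 1"
    unfolding norm_mult using Cons cballN_coord[OF Cons.prems] by (intro mult_mono) auto
  thus ?case by simp
qed

definition nu :: "nat \<Rightarrow> (nat \<Rightarrow> complex) \<Rightarrow> nat \<Rightarrow> fvec" where
  "nu n w N = (\<lambda>x. if x \<in> Wn n N then cnj (wp w x) else 0)"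

lemma nu_fock: "nu n w N \<in> fock n" "fnorm (nu n w N) \<le> sqrt (sW n w N)"
proof -
  have *: "l2 F (nu n w N) \<le> sqrt (sW n w N)" if F: "finite F" for F
  proof -
    have "(\<Sum>x\<in>F. (cmod (nu n w N x))^2) = (\<Sum>x\<in>F \<inter> Wn n N. (cmod (nu n w N x))^2)"
      by (rule sum_zero_outside[OF F]) (simp add: nu_def)
    also have "\<dots> = (\<Sum>x\<in>F \<inter> Wn n N. (cmod (wp w x))^2)"
      by (rule sum.cong) (auto simp: nu_def)
    also have "\<dots> \<le> sW n w N" unfolding sW_def
      by (rule sum_mono2[OF finite_Wn]) auto
    finally show ?thesis unfolding L2_set_def by simp
  qed
  show "fnorm (nu n w N) \<le> sqrt (sW n w N)" using fnorm_leI(2)[OF *] .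
  have "nu n w N x = 0" if "x \<notin> words n" for x using that by (simp add: nu_def Wn_def)
  thus "nu n w N \<in> fock n" using fnorm_leI(1)[OF *] unfolding fock_def by auto
qed

lemma take_len_le: "take (length u) x = u \<Longrightarrow> length u \<le> length x"
proof -
  assume "take (length u) x = u"
  hence "length (take (length u) x) = length u" by simp
  thus ?thesis by simp
qed

lemma J_eq: assumes u: "u \<in> words n"
  shows "(\<Sum>x\<in>Wn n N. shiftw u (nu n w N) x * wp w x)
     = (if length u \<le> N then wp w u * complex_of_real (sW n w (N - length u)) else 0)"
proof (cases "length u \<le> N")
  case False
  have "shiftw u (nu n w N) x = 0" if "x \<in> Wn n N" for x
    using that False take_len_le[of u x] by (auto simp: shiftw_def Wn_def)
  thus ?thesis using False by simp
next
  case True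
  let ?V = "Wn n (N - length u)"
  let ?g = "\<lambda>x. shiftw u (nu n w N) x * wp w x"
  have sub: "(\<lambda>v. u @ v) ` ?V \<subseteq> Wn n N" using u True by (auto simp: Wn_def words_append)
  have zero: "?g x = 0" if "x \<in> Wn n N - (\<lambda>v. u @ v) ` ?V" for x
  proof (cases "take (length u) x = u")
    case True
    then obtain v where x: "x = u @ v" by (metis append_take_drop_id)
    have "v \<in> ?V" using that x by (auto simp: Wn_def words_append)
    thus ?thesis using that x by auto
  qed (simp add: shiftw_def)
  have "(\<Sum>x\<in>Wn n N. ?g x) = (\<Sum>x\<in>(\<lambda>v. u @ v) ` ?V. ?g x)"
    by (rule sum.mono_neutral_right[OF finite_Wn sub]) (use zero in auto)
  also have "\<dots> = (\<Sum>v\<in>?V. ?g (u @ v))" by (rule sum.reindex[unfolded comp_def]) (auto intro: inj_onI)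
  also have "\<dots> = (\<Sum>v\<in>?V. wp w u * complex_of_real ((cmod (wp w v))^2))"
  proof (rule sum.cong[OF refl])
    fix v assume v: "v \<in> ?V"
    hence "v \<in> Wn n N" by (auto simp: Wn_def)
    hence "?g (u @ v) = cnj (wp w v) * (wp w u * wp w v)" by (simp add: shiftw_def nu_def wp_append)
    also have "\<dots> = wp w u * (wp w v * cnj (wp w v))" by (simp add: algebra_simps)
    also have "\<dots> = wp w u * complex_of_real ((cmod (wp w v))^2)" by (simp only: complex_norm_square)
    finally show "?g (u @ v) = wp w u * complex_of_real ((cmod (wp w v))^2)" .
  qed
  also have "\<dots> = wp w u * complex_of_real (sW n w (N - length u))"
    unfolding sW_def by (simp add: sum_distrib_left)
  finally show ?thesis using True by simp
qed

lemma I_eq: assumes F: "finite F" "F \<subseteq> words n"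
  shows "(\<Sum>x\<in>Wn n N. pol n F c (nu n w N) x * wp w x)
    = (\<Sum>u\<in>F. c u * (if length u \<le> N then wp w u * complex_of_real (sW n w (N - length u)) else 0))"
proof -
  have "(\<Sum>x\<in>Wn n N. pol n F c (nu n w N) x * wp w x) = (\<Sum>x\<in>Wn n N. \<Sum>u\<in>F. c u * (shiftw u (nu n w N) x * wp w x))"
    unfolding pol_fock_eq[OF F(2) nu_fock(1)] by (simp add: sum_distrib_right mult.assoc)
  also have "\<dots> = (\<Sum>u\<in>F. c u * (\<Sum>x\<in>Wn n N. shiftw u (nu n w N) x * wp w x))"
    by (subst sum.swap) (simp add: sum_distrib_left)
  also have "\<dots> = (\<Sum>u\<in>F. c u * (if length u \<le> N then wp w u * complex_of_real (sW n w (N - length u)) else 0))"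
    using F(2) by (intro sum.cong refl) (auto simp: J_eq)
  finally show ?thesis .
qed

lemma sW_pos: assumes "w \<in> cballN n" shows "1 \<le> sW n w N"
proof -
  have "(rr n w)^0 \<le> (\<Sum>m\<le>N. (rr n w)^m)"
    by (rule member_le_sum) (use cballN_rr[OF assms] in auto)
  thus ?thesis unfolding sW_formula by simp
qed

lemma t_bounds: assumes w: "w \<in> cballN n"
  shows "0 \<le> 1 - (if length u \<le> N then sW n w (N - length u) else 0) / sW n w N"
    "1 - (if length u \<le> N then sW n w (N - length u) else 0) / sW n w N \<le> real (length u) / real (Suc N)"
proof -
  have S1: "1 \<le> sW n w N" using sW_pos[OF w] .
  have r: "0 \<le> rr n w" "rr n w \<le> 1" using cballN_rr[OF w] by auto
  have "0 \<le> 1 - (if length u \<le> N then sW n w (N - length u) else 0) / sW n w N \<and>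
        1 - (if length u \<le> N then sW n w (N - length u) else 0) / sW n w N \<le> real (length u) / real (Suc N)"
  proof (cases "length u \<le> N")
    case False
    have "1 \<le> real (length u) / real (Suc N)" using False by (simp add: field_simps)
    thus ?thesis using False by simp
  next
    case True
    define M where "M = N - length u"
    define d where "d = length u"
    have N: "N = M + d" using True unfolding M_def d_def by simp
    let ?S = "\<Sum>m\<le>M + d. (rr n w)^m" and ?T = "\<Sum>m\<le>M. (rr n w)^m"
    have SS: "sW n w N = ?S" "sW n w (N - length u) = ?T"
      using N by (simp_all add: sW_formula M_def)
    have Spos: "0 < ?S" using S1 SS by simp
    have "0 \<le> ?S - ?T" using geo_tail(2)[OF r] .
    hence a: "0 \<le> 1 - ?T / ?S" using Spos by (simp add: field_simps)
    have "real (M + d + 1) * (?S - ?T) \<le> real d * ?S" by (rule cheb[OF r])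
    hence "1 - ?T / ?S \<le> real d / real (M + d + 1)" using Spos
      by (simp add: field_simps)
    thus ?thesis using a True SS by (simp add: N d_def)
  qed
  thus "0 \<le> 1 - (if length u \<le> N then sW n w (N - length u) else 0) / sW n w N"
    "1 - (if length u \<le> N then sW n w (N - length u) else 0) / sW n w N \<le> real (length u) / real (Suc N)" by auto
qed

lemma ev_bound_N:
  assumes w: "w \<in> cballN n" and F: "finite F" "F \<subseteq> words n"
  shows "cmod (ev w (pol n F c)) \<le> opnorm n (pol n F c) + (\<Sum>u\<in>F. cmod (c u) * real (length u)) / real (Suc N)"
proof -
  let ?p = "pol n F c"
  let ?W = "Wn n N"
  let ?S = "sW n w N"
  let ?nu = "nu n w N"
  define t where "t (u::nat list) = (if length u \<le> N then sW n w (N - length u) else 0)" for u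
  define I where "I = (\<Sum>x\<in>?W. ?p ?nu x * wp w x)"
  have bp: "bop n ?p" by (rule bop_pol[OF F(2) F(1)])
  have S1: "1 \<le> ?S" using sW_pos[OF w] .
  have pnu: "?p ?nu \<in> fock n" using bop_fock[OF bp nu_fock(1)] .
  have "cmod I \<le> (\<Sum>x\<in>?W. cmod (?p ?nu x) * cmod (wp w x))"
    unfolding I_def by (rule order_trans[OF norm_sum]) (simp add: norm_mult)
  also have "\<dots> \<le> L2_set (\<lambda>x. cmod (?p ?nu x)) ?W * L2_set (\<lambda>x. cmod (wp w x)) ?W"
    using L2_set_mult_ineq[of "\<lambda>x. cmod (?p ?nu x)" "\<lambda>x. cmod (wp w x)" ?W] by simp
  also have "\<dots> \<le> fnorm (?p ?nu) * sqrt ?S"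
  proof -
    have "L2_set (\<lambda>x. cmod (?p ?nu x)) ?W \<le> fnorm (?p ?nu)"
      by (rule l2_le_fnorm[OF fock_bdd[OF pnu] finite_Wn])
    moreover have "L2_set (\<lambda>x. cmod (wp w x)) ?W = sqrt ?S" unfolding L2_set_def sW_def ..
    ultimately show ?thesis by (metis mult_right_mono real_sqrt_ge_zero order_trans[OF zero_le_one S1])
  qed
  also have "\<dots> \<le> (opnorm n ?p * sqrt ?S) * sqrt ?S"
  proof -
    have "fnorm (?p ?nu) \<le> opnorm n ?p * fnorm ?nu" by (rule opnorm_le[OF bp nu_fock(1)])
    also have "\<dots> \<le> opnorm n ?p * sqrt ?S" by (rule mult_left_mono[OF nu_fock(2) opnorm_nonneg[OF bp]])
    finally show ?thesis by (rule mult_right_mono) (use S1 in simp)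
  qed
  also have "\<dots> = opnorm n ?p * ?S" using S1 by (simp add: mult.assoc)
  finally have Ib: "cmod I \<le> opnorm n ?p * ?S" .
  have Ieq: "I = (\<Sum>u\<in>F. c u * wp w u * complex_of_real (t u))"
    unfolding I_def I_eq[OF F] by (intro sum.cong refl) (simp add: t_def)
  have E: "ev w ?p - I / complex_of_real ?S = (\<Sum>u\<in>F. c u * wp w u * complex_of_real (1 - t u / ?S))"
    unfolding ev_pol[OF F] Ieq using S1
    by (simp add: sum_divide_distrib sum_subtractf[symmetric] algebra_simps diff_divide_distrib)
  have "cmod (ev w ?p - I / complex_of_real ?S) \<le> (\<Sum>u\<in>F. cmod (c u * wp w u * complex_of_real (1 - t u / ?S)))"
    unfolding E by (rule norm_sum)
  also have "\<dots> = (\<Sum>u\<in>F. cmod (c u) * cmod (wp w u) * \<bar>1 - t u / ?S\<bar>)"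
    by (simp only: norm_mult norm_of_real)
  also have "\<dots> \<le> (\<Sum>u\<in>F. cmod (c u) * (real (length u) / real (Suc N)))"
  proof (rule sum_mono)
    fix u assume "u \<in> F"
    have hh: "cmod (wp w u) * \<bar>1 - t u / ?S\<bar> \<le> 1 * (real (length u) / real (Suc N))"
      using t_bounds[OF w, of u N] wp_le1[OF w, of u] unfolding t_def[symmetric]
      by (intro mult_mono) auto
    thus "cmod (c u) * cmod (wp w u) * \<bar>1 - t u / ?S\<bar> \<le> cmod (c u) * (real (length u) / real (Suc N))"
    proof -
      from mult_left_mono[OF hh norm_ge_zero[of "c u"]]
      show ?thesis by (simp only: mult.assoc mult_1_left)
    qed
  qed
  also have "\<dots> = (\<Sum>u\<in>F. cmod (c u) * real (length u)) / real (Suc N)"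
    by (simp add: sum_divide_distrib)
  finally have D: "cmod (ev w ?p - I / complex_of_real ?S) \<le> (\<Sum>u\<in>F. cmod (c u) * real (length u)) / real (Suc N)" .
  have "cmod (I / complex_of_real ?S) \<le> opnorm n ?p" using Ib S1 by (simp add: norm_divide pos_divide_le_eq)
  moreover have "cmod (ev w ?p) \<le> cmod (I / complex_of_real ?S) + cmod (ev w ?p - I / complex_of_real ?S)"
    by (rule norm_triangle_sub)
  ultimately show ?thesis using D by simp
qed

lemma ev_bound: assumes w: "w \<in> cballN n" and p: "p \<in> poly_ops n" shows "cmod (ev w p) \<le> opnorm n p"
proof -
  obtain F c where F: "finite F" "F \<subseteq> words n" "p = pol n F c" using p unfolding poly_ops_iff by auto
  let ?K = "\<Sum>u\<in>F. cmod (c u) * real (length u)"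
  have "(\<lambda>N. opnorm n p + ?K * inverse (real (Suc N))) \<longlonglongrightarrow> opnorm n p + ?K * 0"
    by (intro tendsto_intros LIMSEQ_inverse_real_of_nat)
  moreover have "\<forall>N. cmod (ev w p) \<le> opnorm n p + ?K * inverse (real (Suc N))"
    using ev_bound_N[OF w F(1,2), of c] F(3) by (simp add: divide_inverse)
  ultimately show ?thesis by (intro LIMSEQ_le_const) auto
qed



lemma ev_diff_bound: assumes w: "w \<in> cballN n" and p: "p \<in> poly_ops n" and q: "q \<in> poly_ops n"
  shows "cmod (ev w p - ev w q) \<le> opnorm n (lincomb 1 p (-1) q)"
  using ev_bound[OF w poly_lincomb[OF p q, of 1 "-1"]] ev_lincomb[OF p q, of w 1 "-1"] by simp

lemma approx_cross: assumes A: "A \<in> discalg n" "approx n A p" "approx n A q" and w: "w \<in> cballN n"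
  shows "cmod (ev w (p m) - ev w (q k)) \<le> opnorm n (lincomb 1 A (-1) (p m)) + opnorm n (lincomb 1 A (-1) (q k))"
proof -
  have pm: "p m \<in> poly_ops n" and qk: "q k \<in> poly_ops n" using A approx_poly by auto
  have bA: "bop n A" using discalg_bop A by auto
  have e: "lincomb 1 (p m) (-1) (q k) = lincomb (-1) (lincomb 1 A (-1) (p m)) 1 (lincomb 1 A (-1) (q k))"
    unfolding lincomb_def by auto
  have "opnorm n (lincomb 1 (p m) (-1) (q k)) \<le> cmod (-1) * opnorm n (lincomb 1 A (-1) (p m)) + cmod 1 * opnorm n (lincomb 1 A (-1) (q k))"
    unfolding e by (intro opnorm_lincomb bop_lincomb bA bop_poly pm qk)
  thus ?thesis using ev_diff_bound[OF w pm qk] by simp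
qed

lemma approx_convergent: assumes A: "A \<in> discalg n" "approx n A p" and w: "w \<in> cballN n"
  shows "convergent (\<lambda>m. ev w (p m))"
proof -
  let ?x = "\<lambda>m. opnorm n (lincomb 1 A (-1) (p m))"
  have "Cauchy (\<lambda>m. ev w (p m))"
  proof (rule metric_CauchyI)
    fix e :: real assume e: "e > 0"
    have "eventually (\<lambda>m. ?x m < e / 2) sequentially"
      using order_tendstoD(2)[OF approx_bound[OF A(2)], of "e/2"] e by simp
    then obtain M where M: "\<And>m. m \<ge> M \<Longrightarrow> ?x m < e / 2" by (auto simp: eventually_sequentially)
    show "\<exists>M. \<forall>m\<ge>M. \<forall>k\<ge>M. dist (ev w (p m)) (ev w (p k)) < e"
    proof (intro exI allI impI)
      fix m k assume mk: "m \<ge> M" "k \<ge> M"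
      have "?x m < e/2" "?x k < e/2" using M mk by auto
      hence "?x m + ?x k < e" by simp
      thus "dist (ev w (p m)) (ev w (p k)) < e" using approx_cross[OF A(1,2,2) w, of m k] by (simp add: dist_norm)
    qed
  qed
  thus ?thesis by (simp add: Cauchy_convergent_iff)
qed

lemma approx_same_lim: assumes A: "A \<in> discalg n" "approx n A p" "approx n A q" and w: "w \<in> cballN n"
  and L: "(\<lambda>m. ev w (p m)) \<longlonglongrightarrow> L"
  shows "(\<lambda>m. ev w (q m)) \<longlonglongrightarrow> L"
proof -
  have "(\<lambda>m. ev w (q m) - ev w (p m)) \<longlonglongrightarrow> 0"
  proof (rule tendsto_norm_zero_cancel)
    show "(\<lambda>m. norm (ev w (q m) - ev w (p m))) \<longlonglongrightarrow> 0"
    proof (rule squeeze0)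
      fix m show "0 \<le> norm (ev w (q m) - ev w (p m))" by simp
      show "norm (ev w (q m) - ev w (p m)) \<le> opnorm n (lincomb 1 A (-1) (q m)) + opnorm n (lincomb 1 A (-1) (p m))"
        using approx_cross[OF A(1,3,2) w] by simp
    next
      show "(\<lambda>m. opnorm n (lincomb 1 A (-1) (q m)) + opnorm n (lincomb 1 A (-1) (p m))) \<longlonglongrightarrow> 0"
        using tendsto_add[OF approx_bound[OF A(3)] approx_bound[OF A(2)]] by simp
    qed
  qed
  from tendsto_add[OF L this] show ?thesis by simp
qed

definition chi :: "nat \<Rightarrow> (nat \<Rightarrow> complex) \<Rightarrow> fop \<Rightarrow> complex" where
  "chi n w A = (if A \<in> discalg n then lim (\<lambda>m. ev w ((SOME p. approx n A p) m)) else 0)"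

lemma chi_tendsto: assumes A: "A \<in> discalg n" "approx n A p" and w: "w \<in> cballN n"
  shows "(\<lambda>m. ev w (p m)) \<longlonglongrightarrow> chi n w A"
proof -
  let ?q = "SOME p. approx n A p"
  have q: "approx n A ?q" using A by (metis someI_ex)
  have "(\<lambda>m. ev w (?q m)) \<longlonglongrightarrow> lim (\<lambda>m. ev w (?q m))"
    using approx_convergent[OF A(1) q w] by (simp add: convergent_LIMSEQ_iff)
  hence "(\<lambda>m. ev w (p m)) \<longlonglongrightarrow> lim (\<lambda>m. ev w (?q m))" by (rule approx_same_lim[OF A(1) q A(2) w])
  thus ?thesis unfolding chi_def using A by simp
qed

lemma approx_const: "p \<in> poly_ops n \<Longrightarrow> approx n p (\<lambda>_. p)"
  unfolding approx_def by (simp add: lincomb_self opnorm_zero)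

lemma chi_poly: assumes "p \<in> poly_ops n" "w \<in> cballN n" shows "chi n w p = ev w p"
  using chi_tendsto[OF poly_discalg[OF assms(1)] approx_const[OF assms(1)] assms(2)]
  by (simp add: LIMSEQ_const_iff)

lemma discalg_approx: "A \<in> discalg n \<Longrightarrow> \<exists>p. approx n A p"
  using discalg_iff by auto

lemma chi_lincomb: assumes A: "A \<in> discalg n" and B: "B \<in> discalg n" and w: "w \<in> cballN n"
  shows "chi n w (lincomb a A b B) = a * chi n w A + b * chi n w B"
proof -
  obtain p q where p: "approx n A p" and q: "approx n B q" using discalg_approx A B by blast
  have "(\<lambda>m. ev w (lincomb a (p m) b (q m))) \<longlonglongrightarrow> chi n w (lincomb a A b B)"
    by (rule chi_tendsto[OF discalg_lincomb[OF A B] approx_lincomb[OF A p B q] w])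
  moreover have "(\<lambda>m. ev w (lincomb a (p m) b (q m))) = (\<lambda>m. a * ev w (p m) + b * ev w (q m))"
    using ev_lincomb approx_poly p q by blast
  moreover have "(\<lambda>m. a * ev w (p m) + b * ev w (q m)) \<longlonglongrightarrow> a * chi n w A + b * chi n w B"
    by (intro tendsto_intros chi_tendsto A B p q w)
  ultimately show ?thesis using LIMSEQ_unique by metis
qed

lemma chi_comp: assumes A: "A \<in> discalg n" and B: "B \<in> discalg n" and w: "w \<in> cballN n"
  shows "chi n w (A \<circ> B) = chi n w A * chi n w B"
proof -
  obtain p q where p: "approx n A p" and q: "approx n B q" using discalg_approx A B by blast
  have "(\<lambda>m. ev w (p m \<circ> q m)) \<longlonglongrightarrow> chi n w (A \<circ> B)"
    by (rule chi_tendsto[OF discalg_comp[OF A B] approx_comp[OF A p B q] w])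
  moreover have "(\<lambda>m. ev w (p m \<circ> q m)) = (\<lambda>m. ev w (p m) * ev w (q m))"
    using ev_comp approx_poly p q by blast
  moreover have "(\<lambda>m. ev w (p m) * ev w (q m)) \<longlonglongrightarrow> chi n w A * chi n w B"
    by (intro tendsto_intros chi_tendsto A B p q w)
  ultimately show ?thesis using LIMSEQ_unique by metis
qed

lemma chi_is_char: assumes w: "w \<in> cballN n" shows "is_char n (chi n w)"
proof -
  have 1: "chi n w (IdF n) = 1"
    using chi_poly[OF IdF_poly w] ev_Sword[of "[]" n w] by (simp add: Sword_Nil wp_def)
  have 2: "\<forall>A. A \<notin> discalg n \<longrightarrow> chi n w A = 0" unfolding chi_def by simp
  have 3: "\<forall>A\<in>discalg n. \<forall>B\<in>discalg n. chi n w (A \<circ> B) = chi n w A * chi n w B \<and>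
        (\<forall>a b. chi n w (lincomb a A b B) = a * chi n w A + b * chi n w B)"
    using chi_comp chi_lincomb w by blast
  show ?thesis unfolding is_char_def using 1 2 3 by blast
qed

lemma chi_Sop: assumes w: "w \<in> cballN n" and i: "i < n" shows "chi n w (Sop n i) = w i"
  using chi_poly[OF Sop_poly[OF i] w] ev_Sword[of "[i]" n w] i by (simp add: Sop_Sword wp_def words_Cons)



lemma l2_sum_le: assumes "\<And>m. h m \<in> fock n" "finite F"
  shows "l2 F (\<lambda>x. \<Sum>m<(N::nat). h m x) \<le> (\<Sum>m<N. fnorm (h m))"
proof (induction N)
  case 0 thus ?case by simp
next
  case (Suc N)
  have "l2 F (\<lambda>x. \<Sum>m<Suc N. h m x) = l2 F (\<lambda>x. 1 * (\<Sum>m<N. h m x) + 1 * h N x)" by simp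
  also have "\<dots> \<le> cmod 1 * l2 F (\<lambda>x. \<Sum>m<N. h m x) + cmod 1 * l2 F (h N)" by (rule l2_lin)
  also have "\<dots> \<le> (\<Sum>m<N. fnorm (h m)) + fnorm (h N)"
    using Suc l2_le_fnorm[OF fock_bdd[OF assms(1)] assms(2)] by (simp add: add_mono)
  finally show ?case by simp
qed

lemma series_fock:
  assumes h: "\<And>m. h m \<in> fock n" and a: "\<And>m. fnorm (h m) \<le> a m" and sa: "summable a"
  shows "\<And>x. summable (\<lambda>m. h m x)" "(\<lambda>x. \<Sum>m. h m x) \<in> fock n" "fnorm (\<lambda>x. \<Sum>m. h m x) \<le> suminf a"
proof -
  have a0: "0 \<le> a m" for m using a[of m] fnorm_nonneg[OF fock_bdd[OF h]] by (meson order_trans)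
  show sx: "summable (\<lambda>m. h m x)" for x
    by (rule summable_comparison_test'[OF sa]) (use cmod_le_fnorm[OF fock_bdd[OF h]] a in \<open>meson order_trans\<close>)
  have *: "l2 F (\<lambda>x. \<Sum>m. h m x) \<le> suminf a" if F: "finite F" for F
  proof (rule LIMSEQ_le_const2)
    show "(\<lambda>N. l2 F (\<lambda>x. \<Sum>m<N. h m x)) \<longlonglongrightarrow> l2 F (\<lambda>x. \<Sum>m. h m x)"
      unfolding L2_set_def by (intro tendsto_intros summable_LIMSEQ sx)
    show "\<exists>N. \<forall>k\<ge>N. l2 F (\<lambda>x. \<Sum>m<k. h m x) \<le> suminf a"
    proof (intro exI allI impI)
      fix k :: nat
      have "l2 F (\<lambda>x. \<Sum>m<k. h m x) \<le> (\<Sum>m<k. fnorm (h m))" by (rule l2_sum_le[OF h F])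
      also have "\<dots> \<le> (\<Sum>m<k. a m)" by (intro sum_mono a)
      also have "\<dots> \<le> suminf a" by (rule sum_le_suminf[OF sa]) (use a0 in auto)
      finally show "l2 F (\<lambda>x. \<Sum>m<k. h m x) \<le> suminf a" .
    qed
  qed
  show "fnorm (\<lambda>x. \<Sum>m. h m x) \<le> suminf a" using fnorm_leI(2)[OF *] .
  have "(\<Sum>m. h m x) = 0" if "x \<notin> words n" for x using fock_vanish[OF h that] by simp
  thus "(\<lambda>x. \<Sum>m. h m x) \<in> fock n" using fnorm_leI(1)[OF *] unfolding fock_def by auto
qed

primrec Bp :: "nat \<Rightarrow> fop \<Rightarrow> nat \<Rightarrow> fop" where
  "Bp n B 0 = IdF n"
| "Bp n B (Suc m) = B \<circ> Bp n B m"

lemma IdF_fock: "f \<in> fock n \<Longrightarrow> IdF n f = f" unfolding IdF_def by simp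

lemma bop_IdF: "bop n (IdF n)" using bop_poly IdF_poly by auto

lemma opnorm_IdF: "opnorm n (IdF n) \<le> 1"
  by (rule opnorm_leI) (auto simp: IdF_fock)

lemma Bp_discalg: "B \<in> discalg n \<Longrightarrow> Bp n B m \<in> discalg n"
  by (induction m) (auto intro: IdF_discalg discalg_comp)

lemma Bp_bop: "B \<in> discalg n \<Longrightarrow> bop n (Bp n B m)"
  using Bp_discalg discalg_bop by auto

lemma opnorm_Bp: assumes "B \<in> discalg n" shows "opnorm n (Bp n B m) \<le> (opnorm n B)^m"
proof (induction m)
  case 0 thus ?case using opnorm_IdF by simp
next
  case (Suc m)
  have "opnorm n (B \<circ> Bp n B m) \<le> opnorm n B * opnorm n (Bp n B m)"
    by (rule opnorm_comp[OF discalg_bop[OF assms] Bp_bop[OF assms]])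
  also have "\<dots> \<le> opnorm n B * (opnorm n B)^m"
    by (rule mult_left_mono[OF Suc opnorm_nonneg[OF discalg_bop[OF assms]]])
  finally have "opnorm n (B \<circ> Bp n B m) \<le> (opnorm n B)^(Suc m)" by simp
  thus ?case by (simp only: Bp.simps)
qed

lemma fnorm_Bp: assumes "B \<in> discalg n" "f \<in> fock n" shows "fnorm (Bp n B m f) \<le> (opnorm n B)^m * fnorm f"
proof -
  have "fnorm (Bp n B m f) \<le> opnorm n (Bp n B m) * fnorm f" by (rule opnorm_le[OF Bp_bop[OF assms(1)] assms(2)])
  also have "\<dots> \<le> (opnorm n B)^m * fnorm f"
    by (rule mult_right_mono[OF opnorm_Bp[OF assms(1)] fnorm_nonneg[OF fock_bdd[OF assms(2)]]])
  finally show ?thesis .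
qed

lemma Bp_add: assumes "B \<in> discalg n" "f \<in> fock n" shows "Bp n B (m + k) f = Bp n B m (Bp n B k f)"
proof (induction m)
  case 0 thus ?case using IdF_fock bop_fock[OF Bp_bop[OF assms(1)] assms(2)] by simp
next
  case (Suc m) thus ?case by simp
qed

lemma Bp_fock: "B \<in> discalg n \<Longrightarrow> f \<in> fock n \<Longrightarrow> Bp n B m f \<in> fock n"
  using bop_fock Bp_bop by blast

definition Vop :: "nat \<Rightarrow> fop \<Rightarrow> fop" where
  "Vop n B = (\<lambda>f x. \<Sum>m. Bp n B m f x)"

definition Pop :: "nat \<Rightarrow> fop \<Rightarrow> nat \<Rightarrow> fop" where
  "Pop n B N = (\<lambda>f x. \<Sum>m<N. Bp n B m f x)"

locale neu =
  fixes n B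
  assumes B: "B \<in> discalg n" and q1: "opnorm n B < 1"
begin

abbreviation "q \<equiv> opnorm n B"

lemma q0: "0 \<le> q" using opnorm_nonneg[OF discalg_bop[OF B]] .

lemma sum_geo: "summable (\<lambda>m. q^(m + N) * c)" "(\<Sum>m. q^(m + N) * c) = q^N * c / (1 - q)"
proof -
  have "summable (\<lambda>m. q^m)" using q0 q1 by (intro summable_geometric) simp
  hence s: "summable (\<lambda>m. q^m * (q^N * c))" by (rule summable_mult2)
  thus "summable (\<lambda>m. q^(m + N) * c)" by (simp add: power_add algebra_simps)
  have "(\<Sum>m. q^m * (q^N * c)) = (\<Sum>m. q^m) * (q^N * c)" by (rule suminf_mult2[symmetric]) (use q0 q1 in \<open>intro summable_geometric; simp\<close>)
  also have "\<dots> = q^N * c / (1 - q)" using q0 q1 by (simp add: suminf_geometric)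
  finally show "(\<Sum>m. q^(m + N) * c) = q^N * c / (1 - q)" by (simp add: power_add algebra_simps)
qed

lemma tail_series: assumes f: "f \<in> fock n"
  shows "\<And>x. summable (\<lambda>m. Bp n B (m + N) f x)" "(\<lambda>x. \<Sum>m. Bp n B (m + N) f x) \<in> fock n"
    "fnorm (\<lambda>x. \<Sum>m. Bp n B (m + N) f x) \<le> q^N * fnorm f / (1 - q)"
proof -
  have h: "\<And>m. Bp n B (m + N) f \<in> fock n" using Bp_fock[OF B f] .
  have a: "\<And>m. fnorm (Bp n B (m + N) f) \<le> q^(m + N) * fnorm f" using fnorm_Bp[OF B f] .
  note S = series_fock[OF h a sum_geo(1)]
  show "\<And>x. summable (\<lambda>m. Bp n B (m + N) f x)" using S(1) .
  show "(\<lambda>x. \<Sum>m. Bp n B (m + N) f x) \<in> fock n" using S(2) .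
  show "fnorm (\<lambda>x. \<Sum>m. Bp n B (m + N) f x) \<le> q^N * fnorm f / (1 - q)" using S(3) sum_geo(2) by simp
qed

lemma V_fock: "f \<in> fock n \<Longrightarrow> Vop n B f \<in> fock n \<and> fnorm (Vop n B f) \<le> fnorm f / (1 - q)"
  using tail_series[of f 0] unfolding Vop_def by simp

lemma V_out: "f \<notin> fock n \<Longrightarrow> Vop n B f = 0"
  unfolding Vop_def using bop_out[OF Bp_bop[OF B]] by (simp add: zero_fun_def)

lemma V_minus_P: assumes f: "f \<in> fock n"
  shows "(\<lambda>x. Vop n B f x - Pop n B N f x) = (\<lambda>x. \<Sum>m. Bp n B (m + N) f x)"
proof (rule ext)
  fix x
  have "summable (\<lambda>m. Bp n B m f x)" using tail_series(1)[OF f, of 0 x] by simp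
  from suminf_split_initial_segment[OF this, of N]
  show "Vop n B f x - Pop n B N f x = (\<Sum>m. Bp n B (m + N) f x)" unfolding Vop_def Pop_def by simp
qed

lemma bop_V: "bop n (Vop n B)"
  unfolding bop_def
proof (intro conjI ballI allI impI)
  show "Vop n B ` fock n \<subseteq> fock n" using V_fock by auto
  show "Vop n B f = 0" if "f \<notin> fock n" for f using V_out[OF that] .
  show "Vop n B (\<lambda>w. a * f w + b * g w) = (\<lambda>w. a * Vop n B f w + b * Vop n B g w)"
    if f: "f \<in> fock n" and g: "g \<in> fock n" for f g a b
  proof (rule ext)
    fix x
    have sf: "summable (\<lambda>m. Bp n B m f x)" and sg: "summable (\<lambda>m. Bp n B m g x)"
      using tail_series(1)[OF f, of 0 x] tail_series(1)[OF g, of 0 x] by auto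
    have "Vop n B (\<lambda>w. a * f w + b * g w) x = (\<Sum>m. a * Bp n B m f x + b * Bp n B m g x)"
      unfolding Vop_def using bop_lin[OF Bp_bop[OF B] f g] by simp
    also have "\<dots> = a * (\<Sum>m. Bp n B m f x) + b * (\<Sum>m. Bp n B m g x)"
      using suminf_add[OF summable_mult[OF sf] summable_mult[OF sg]] suminf_mult[OF sf] suminf_mult[OF sg] by simp
    finally show "Vop n B (\<lambda>w. a * f w + b * g w) x = a * Vop n B f x + b * Vop n B g x" unfolding Vop_def .
  qed
  show "\<exists>C. \<forall>f\<in>fock n. fnorm (Vop n B f) \<le> C * fnorm f"
    using V_fock by (intro exI[of _ "1 / (1 - q)"]) auto
qed

lemma Pop_discalg: "Pop n B N \<in> discalg n"
proof (induction N)
  case 0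
  have "Pop n B 0 = (\<lambda>f. 0)" unfolding Pop_def by (auto simp: zero_fun_def)
  thus ?case using zero_discalg[of n] by metis
next
  case (Suc N)
  have "Pop n B (Suc N) = lincomb 1 (Pop n B N) 1 (Bp n B N)" unfolding Pop_def lincomb_def by simp
  thus ?case using discalg_lincomb[OF Suc Bp_discalg[OF B]] by simp
qed

lemma opnorm_V_P: "opnorm n (lincomb 1 (Vop n B) (-1) (Pop n B N)) \<le> q^N / (1 - q)"
proof (rule opnorm_leI[OF _ divide_nonneg_pos[OF zero_le_power[OF q0]]])
  fix f assume f: "f \<in> fock n"
  have "lincomb 1 (Vop n B) (-1) (Pop n B N) f = (\<lambda>x. Vop n B f x - Pop n B N f x)"
    unfolding lincomb_def by simp
  also have "\<dots> = (\<lambda>x. \<Sum>m. Bp n B (m + N) f x)" by (rule V_minus_P[OF f])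
  finally show "fnorm (lincomb 1 (Vop n B) (-1) (Pop n B N) f) \<le> q^N / (1 - q) * fnorm f"
    using tail_series(3)[OF f, of N] by simp
qed (use q1 in simp)

lemma V_discalg: "Vop n B \<in> discalg n"
  unfolding discalg_def2
proof (intro conjI allI impI bop_V)
  fix e :: real assume e: "e > 0"
  have "(\<lambda>N. q^N / (1 - q)) \<longlonglongrightarrow> 0 / (1 - q)"
    using q0 q1 by (intro tendsto_intros LIMSEQ_power_zero) auto
  hence "eventually (\<lambda>N. q^N / (1 - q) < e / 2) sequentially"
    using e by (intro order_tendstoD(2)) auto
  then obtain N where N: "q^N / (1 - q) < e / 2" by (auto dest: eventually_happens)
  obtain p where p: "p \<in> poly_ops n" "opnorm n (lincomb 1 (Pop n B N) (-1) p) < e / 2"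
    using Pop_discalg[of N] e unfolding discalg_def2 by (meson half_gt_zero)
  have bP: "bop n (Pop n B N)" using discalg_bop[OF Pop_discalg] .
  have eq: "lincomb 1 (Vop n B) (-1) p = lincomb 1 (lincomb 1 (Vop n B) (-1) (Pop n B N)) 1 (lincomb 1 (Pop n B N) (-1) p)"
    unfolding lincomb_def by auto
  have "opnorm n (lincomb 1 (Vop n B) (-1) p) \<le> cmod 1 * opnorm n (lincomb 1 (Vop n B) (-1) (Pop n B N)) + cmod 1 * opnorm n (lincomb 1 (Pop n B N) (-1) p)"
    unfolding eq by (intro opnorm_lincomb bop_lincomb bop_V bP bop_poly p(1))
  also have "\<dots> < e" using opnorm_V_P[of N] N p(2) by (simp only: norm_one mult_1_left)
  finally show "\<exists>p\<in>poly_ops n. opnorm n (lincomb 1 (Vop n B) (-1) p) < e" using p(1) by blast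
qed

end



lemma fock_sum1: "finite S \<Longrightarrow> (\<And>m. m \<in> S \<Longrightarrow> g m \<in> fock n) \<Longrightarrow> (\<lambda>x. \<Sum>m\<in>S. g m x) \<in> fock n"
  using fock_sum[of S g n "\<lambda>_. 1"] by simp

lemma bop_sum: assumes T: "bop n T" and S: "finite S" and g: "\<And>m. m \<in> S \<Longrightarrow> g m \<in> fock n"
  shows "T (\<lambda>x. \<Sum>m\<in>S. g m x) = (\<lambda>x. \<Sum>m\<in>S. T (g m) x)"
  using S g
proof (induction S rule: finite_induct)
  case empty thus ?case using bop_zero[OF T] by simp
next
  case (insert a S)
  have ps: "(\<lambda>x. \<Sum>m\<in>S. g m x) \<in> fock n" using fock_sum1 insert by auto
  have ga: "g a \<in> fock n" using insert by auto
  have "(\<lambda>x. \<Sum>m\<in>insert a S. g m x) = (\<lambda>x. 1 * g a x + 1 * (\<Sum>m\<in>S. g m x))" using insert by simp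
  hence "T (\<lambda>x. \<Sum>m\<in>insert a S. g m x) = (\<lambda>x. 1 * T (g a) x + 1 * T (\<lambda>x. \<Sum>m\<in>S. g m x) x)"
    using bop_lin[OF T ga ps, where a=1 and b=1] by simp
  also have "\<dots> = (\<lambda>x. \<Sum>m\<in>insert a S. T (g m) x)" using insert by simp
  finally show ?case .
qed

context neu begin

lemma Pop_fock: "f \<in> fock n \<Longrightarrow> Pop n B N f \<in> fock n"
  unfolding Pop_def by (rule fock_sum1) (auto intro: Bp_fock[OF B])

lemma B_V: assumes f: "f \<in> fock n" shows "B (Vop n B f) = (\<lambda>x. Vop n B f x - f x)"
proof (rule ext)
  fix x
  let ?g = "Vop n B f"
  have bB: "bop n B" using discalg_bop[OF B] .
  have gf: "?g \<in> fock n" using V_fock[OF f] by auto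
  have diff: "B ?g x - (\<Sum>m<N. Bp n B (Suc m) f x) = B (\<lambda>y. \<Sum>m. Bp n B (m + N) f y) x" for N
  proof -
    have "B (Pop n B N f) = (\<lambda>x. \<Sum>m<N. B (Bp n B m f) x)"
      unfolding Pop_def by (rule bop_sum[OF bB]) (auto intro: Bp_fock[OF B f])
    hence BP: "B (Pop n B N f) x = (\<Sum>m<N. Bp n B (Suc m) f x)" by simp
    have "B (\<lambda>y. 1 * ?g y + (-1) * Pop n B N f y) = (\<lambda>y. 1 * B ?g y + (-1) * B (Pop n B N f) y)"
      by (rule bop_lin[OF bB gf Pop_fock[OF f]])
    moreover have "(\<lambda>y. 1 * ?g y + (-1) * Pop n B N f y) = (\<lambda>y. \<Sum>m. Bp n B (m + N) f y)"
      using V_minus_P[OF f, of N] by simp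
    ultimately show ?thesis using BP by (metis (no_types, lifting) add_uminus_conv_diff mult_1 mult_minus1)
  qed
  have lim: "(\<lambda>N. \<Sum>m<N. Bp n B (Suc m) f x) \<longlonglongrightarrow> B ?g x"
  proof -
    have "(\<lambda>N. B ?g x - (\<Sum>m<N. Bp n B (Suc m) f x)) \<longlonglongrightarrow> 0"
    proof (rule tendsto_norm_zero_cancel, rule squeeze0)
      fix N
      show "0 \<le> norm (B ?g x - (\<Sum>m<N. Bp n B (Suc m) f x))" by simp
      have t: "(\<lambda>y. \<Sum>m. Bp n B (m + N) f y) \<in> fock n" using tail_series(2)[OF f] .
      have "norm (B ?g x - (\<Sum>m<N. Bp n B (Suc m) f x)) \<le> fnorm (B (\<lambda>y. \<Sum>m. Bp n B (m + N) f y))"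
        unfolding diff by (rule cmod_le_fnorm[OF fock_bdd[OF bop_fock[OF bB t]]])
      also have "\<dots> \<le> q * fnorm (\<lambda>y. \<Sum>m. Bp n B (m + N) f y)" by (rule opnorm_le[OF bB t])
      also have "\<dots> \<le> q * (q^N * fnorm f / (1 - q))" by (rule mult_left_mono[OF tail_series(3)[OF f] q0])
      finally show "norm (B ?g x - (\<Sum>m<N. Bp n B (Suc m) f x)) \<le> q * (q^N * fnorm f / (1 - q))" .
    next
      show "(\<lambda>N. q * (q^N * fnorm f / (1 - q))) \<longlonglongrightarrow> 0"
      proof -
        have "(\<lambda>N. q * (q^N * fnorm f / (1 - q))) \<longlonglongrightarrow> q * (0 * fnorm f / (1 - q))"
          using q0 q1 by (intro tendsto_intros LIMSEQ_power_zero) auto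
        thus ?thesis by simp
      qed
    qed
    from tendsto_diff[OF tendsto_const[of "B ?g x"] this] show ?thesis by simp
  qed
  have s1: "summable (\<lambda>m. Bp n B (m + 1) f x)" using tail_series(1)[OF f] .
  hence s1': "summable (\<lambda>m. Bp n B (Suc m) f x)" by simp
  have "(\<lambda>N. \<Sum>m<N. Bp n B (Suc m) f x) \<longlonglongrightarrow> (\<Sum>m. Bp n B (Suc m) f x)" by (rule summable_LIMSEQ[OF s1'])
  hence "B ?g x = (\<Sum>m. Bp n B (Suc m) f x)" using lim LIMSEQ_unique by blast
  also have "\<dots> = ?g x - Bp n B 0 f x"
    unfolding Vop_def by (rule suminf_split_head) (use tail_series(1)[OF f, of 0] in simp)
  also have "\<dots> = ?g x - f x" using IdF_fock[OF f] by simp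
  finally show "B ?g x = ?g x - f x" .
qed

lemma IB_V: "lincomb 1 (IdF n) (-1) B \<circ> Vop n B = IdF n"
proof (rule ext)
  fix f
  show "(lincomb 1 (IdF n) (-1) B \<circ> Vop n B) f = IdF n f"
  proof (cases "f \<in> fock n")
    case True
    have gf: "Vop n B f \<in> fock n" using V_fock[OF True] by auto
    show ?thesis using B_V[OF True] IdF_fock[OF gf] IdF_fock[OF True] by (simp add: lincomb_app)
  next
    case False
    thus ?thesis using V_out[OF False] bop_zero'[OF discalg_bop[OF B]] bop_zero'[OF bop_IdF]
      by (simp add: lincomb_app IdF_def zero_fun_def)
  qed
qed

lemma char_not1: assumes c: "is_char n \<chi>" shows "\<chi> B \<noteq> 1"
proof
  assume B1: "\<chi> B = 1"
  have IB: "lincomb 1 (IdF n) (-1) B \<in> discalg n" by (rule discalg_lincomb[OF IdF_discalg B])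
  have "1 = \<chi> (IdF n)" using c unfolding is_char_def by simp
  also have "\<dots> = \<chi> (lincomb 1 (IdF n) (-1) B \<circ> Vop n B)" using IB_V by simp
  also have "\<dots> = \<chi> (lincomb 1 (IdF n) (-1) B) * \<chi> (Vop n B)" using c IB V_discalg unfolding is_char_def by blast
  also have "\<chi> (lincomb 1 (IdF n) (-1) B) = 1 * \<chi> (IdF n) + (-1) * \<chi> B" using c IdF_discalg B unfolding is_char_def by blast
  also have "\<dots> = 0" using B1 c unfolding is_char_def by simp
  finally show False by simp
qed

end

lemma char_bound: assumes c: "is_char n \<chi>" and R: "R \<in> discalg n" shows "cmod (\<chi> R) \<le> opnorm n R"
proof (rule ccontr)
  assume "\<not> cmod (\<chi> R) \<le> opnorm n R"
  hence lt: "opnorm n R < cmod (\<chi> R)" by simp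
  have R0: "0 \<le> opnorm n R" using opnorm_nonneg[OF discalg_bop[OF R]] .
  hence l0: "\<chi> R \<noteq> 0" using lt by auto
  let ?B = "lincomb (1 / \<chi> R) R 0 R"
  have Bd: "?B \<in> discalg n" by (rule discalg_lincomb[OF R R])
  have "\<chi> ?B = (1 / \<chi> R) * \<chi> R + 0 * \<chi> R" using c R unfolding is_char_def by blast
  hence B1: "\<chi> ?B = 1" using l0 by simp
  have "opnorm n ?B \<le> cmod (1 / \<chi> R) * opnorm n R + cmod 0 * opnorm n R"
    by (rule opnorm_lincomb[OF discalg_bop[OF R] discalg_bop[OF R]])
  also have "\<dots> = opnorm n R / cmod (\<chi> R)" by (simp add: norm_divide)
  also have "\<dots> < 1" using lt l0 by simp
  finally have "neu n ?B" using Bd by unfold_locales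
  from neu.char_not1[OF this c] B1 show False by simp
qed

lemma char_Sword: assumes c: "is_char n \<chi>" and S: "\<forall>i<n. \<chi> (Sop n i) = w i"
  shows "u \<in> words n \<Longrightarrow> \<chi> (Sword n u) = wp w u"
proof (induction u)
  case Nil thus ?case using c by (simp add: Sword_Nil wp_def is_char_def)
next
  case (Cons i u)
  hence i: "i < n" and u: "u \<in> words n" using words_Cons by auto
  have "\<chi> (Sword n (i # u)) = \<chi> (Sop n i \<circ> Sword n u)" by (simp add: Sword_Cons)
  also have "\<dots> = \<chi> (Sop n i) * \<chi> (Sword n u)"
    using c Sop_discalg[OF i] Sword_discalg[OF u] unfolding is_char_def by blast
  also have "\<dots> = wp w (i # u)" using S i Cons.IH[OF u] by (simp add: wp_def)
  finally show ?case .
qed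

lemma char_pol: assumes c: "is_char n \<chi>" and S: "\<forall>i<n. \<chi> (Sop n i) = w i"
  shows "finite F \<Longrightarrow> F \<subseteq> words n \<Longrightarrow> \<chi> (pol n F c) = (\<Sum>u\<in>F. c u * wp w u)"
proof (induction F rule: finite_induct)
  case empty
  have "pol n {} c = lincomb 0 (IdF n) 0 (IdF n)" unfolding pol_def lincomb_def by simp
  hence "\<chi> (pol n {} c) = 0 * \<chi> (IdF n) + 0 * \<chi> (IdF n)" using c IdF_discalg unfolding is_char_def by metis
  thus ?case by simp
next
  case (insert u F)
  have u: "u \<in> words n" and F: "F \<subseteq> words n" using insert by auto
  have "pol n (insert u F) c = lincomb 1 (pol n F c) (c u) (Sword n u)"
    unfolding pol_def lincomb_def using insert by (simp add: add.commute)
  hence "\<chi> (pol n (insert u F) c) = 1 * \<chi> (pol n F c) + c u * \<chi> (Sword n u)"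
    using c poly_discalg[OF pol_in[OF insert(1) F]] Sword_discalg[OF u] unfolding is_char_def by metis
  thus ?case using insert char_Sword[OF c S u] by (simp add: add.commute)
qed

lemma char_poly: assumes c: "is_char n \<chi>" and S: "\<forall>i<n. \<chi> (Sop n i) = w i" and p: "p \<in> poly_ops n"
  shows "\<chi> p = ev w p"
proof -
  obtain F d where F: "finite F" "F \<subseteq> words n" "p = pol n F d" using p unfolding poly_ops_iff by auto
  show ?thesis using char_pol[OF c S F(1,2)] ev_pol[OF F(1,2)] F(3) by simp
qed

lemma char_unique: assumes c: "is_char n \<chi>" and S: "\<forall>i<n. \<chi> (Sop n i) = w i" and w: "w \<in> cballN n"
  shows "\<chi> = chi n w"
proof (rule ext)
  fix A
  have c2: "is_char n (chi n w)" using chi_is_char[OF w] .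
  have S2: "\<forall>i<n. chi n w (Sop n i) = w i" using chi_Sop[OF w] by auto
  show "\<chi> A = chi n w A"
  proof (cases "A \<in> discalg n")
    case False thus ?thesis using c c2 unfolding is_char_def by auto
  next
    case True
    have EE: "cmod (\<chi> A - chi n w A) \<le> 2 * e" if e: "e > 0" for e
    proof -
      obtain p where p: "p \<in> poly_ops n" "opnorm n (lincomb 1 A (-1) p) < e"
        using True e unfolding discalg_def2 by blast
      have pd: "p \<in> discalg n" using poly_discalg[OF p(1)] .
      have D: "lincomb 1 A (-1) p \<in> discalg n" by (rule discalg_lincomb[OF True pd])
      have "\<chi> (lincomb 1 A (-1) p) = 1 * \<chi> A + (-1) * \<chi> p" using c True pd unfolding is_char_def by blast
      moreover have "chi n w (lincomb 1 A (-1) p) = 1 * chi n w A + (-1) * chi n w p" using c2 True pd unfolding is_char_def by blast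
      moreover have "\<chi> p = chi n w p" using char_poly[OF c S p(1)] char_poly[OF c2 S2 p(1)] by simp
      ultimately have eq: "\<chi> A - chi n w A = \<chi> (lincomb 1 A (-1) p) - chi n w (lincomb 1 A (-1) p)" by simp
      have "cmod (\<chi> A - chi n w A) \<le> cmod (\<chi> (lincomb 1 A (-1) p)) + cmod (chi n w (lincomb 1 A (-1) p))"
        unfolding eq by (rule norm_triangle_ineq4)
      also have "\<dots> \<le> opnorm n (lincomb 1 A (-1) p) + opnorm n (lincomb 1 A (-1) p)"
        by (intro add_mono char_bound[OF c D] char_bound[OF c2 D])
      finally show ?thesis using p(2) by simp
    qed
    have "cmod (\<chi> A - chi n w A) \<le> 0"
    proof (rule field_le_epsilon)
      fix e :: real assume "0 < e"
      hence "cmod (\<chi> A - chi n w A) \<le> 2 * (e / 2)" using EE[of "e/2"] by simp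
      thus "cmod (\<chi> A - chi n w A) \<le> 0 + e" by simp
    qed
    thus ?thesis by simp
  qed
qed

lemma theta_eq: assumes w: "w \<in> cballN n" shows "theta n w = chi n w"
  unfolding theta_def
proof (rule the_equality)
  show "is_char n (chi n w) \<and> (\<forall>i<n. chi n w (Sop n i) = w i)" using chi_is_char[OF w] chi_Sop[OF w] by auto
  fix \<chi> assume "is_char n \<chi> \<and> (\<forall>i<n. \<chi> (Sop n i) = w i)"
  thus "\<chi> = chi n w" using char_unique w by blast
qed



lemma sum_single: assumes "finite S" "b0 \<in> S" "\<And>b. b \<in> S \<Longrightarrow> b \<noteq> b0 \<Longrightarrow> h b = 0"
  shows "sum h S = h b0"
proof -
  have "sum h S = h b0 + sum h (S - {b0})" using assms(1,2) by (rule sum.remove)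
  also have "sum h (S - {b0}) = 0" using assms(3) by (intro sum.neutral) auto
  finally show ?thesis by simp
qed

lemma comp_zero: assumes "bop n g" shows "g \<circ> 0 = 0"
proof (rule ext)
  fix f
  have "g (0 f) = 0" using bop_zero'[OF assms] by simp
  thus "(g \<circ> 0) f = 0 f" by simp
qed

lemma aut_discalg: assumes "is_aut n \<phi>" "A \<in> discalg n" shows "\<phi> A \<in> discalg n"
proof -
  have "bij_betw \<phi> (discalg n) (discalg n)" using assms(1) unfolding is_aut_def by simp
  from bij_betwE[OF this] assms(2) show ?thesis by simp
qed

lemma aut_pow_discalg: assumes "is_aut n \<phi>" "A \<in> discalg n" shows "(\<phi> ^^ b) A \<in> discalg n"
proof (induction b)
  case 0 thus ?case using assms(2) by simp
next
  case (Suc b) thus ?case using aut_discalg[OF assms(1) Suc] by simp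
qed

lemma aut_zero: assumes "is_aut n \<phi>" shows "\<phi> 0 = 0"
proof -
  have z: "(0::fop) = lincomb 0 (IdF n) 0 (IdF n)" unfolding lincomb_def by (auto simp: zero_fun_def)
  have "\<phi> (lincomb 0 (IdF n) 0 (IdF n)) = lincomb 0 (\<phi> (IdF n)) 0 (\<phi> (IdF n))"
    using assms IdF_discalg unfolding is_aut_def by blast
  also have "\<dots> = 0" unfolding lincomb_def by (auto simp: zero_fun_def)
  finally show ?thesis using z by simp
qed

definition XA :: "fop \<Rightarrow> nat \<Rightarrow> fop" where "XA A = (\<lambda>m. if m = 0 then A else 0)"

lemma XA_cp: "A \<in> discalg n \<Longrightarrow> XA A \<in> cp n"
  unfolding cp_def XA_def by (auto intro: finite_subset[of _ "{0}"])

lemma cpU_cp: "cpU n \<in> cp n"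
  unfolding cp_def cpU_def using IdF_discalg by (auto intro: finite_subset[of _ "{1}"])

lemma zero_cp: "(0 :: nat \<Rightarrow> fop) \<in> cp n"
  unfolding cp_def by simp

lemma covariance: assumes phi: "is_aut n \<phi>" and A: "A \<in> discalg n"
  shows "cpmult \<phi> (XA A) (cpU n) = cpmult \<phi> (cpU n) (XA (\<phi> A))"
proof (rule ext)
  fix m
  have pA: "\<phi> A \<in> discalg n" using aut_discalg[OF phi A] .
  have XAd: "XA B j \<in> discalg n" if "B \<in> discalg n" for B j using that by (simp add: XA_def)
  have cUd: "cpU n j \<in> discalg n" for j by (simp add: cpU_def IdF_discalg)
  have L: "cpmult \<phi> (XA A) (cpU n) m = (if m = 1 then \<phi> A else 0)"
  proof (cases "m = 0")
    case True
    thus ?thesis unfolding cpmult_def using comp_zero[OF discalg_bop[OF A]] by (simp add: cpU_def XA_def)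
  next
    case False
    have "cpmult \<phi> (XA A) (cpU n) m = (\<phi> ^^ 1) (XA A (m - 1)) \<circ> cpU n 1"
      unfolding cpmult_def
    proof (rule sum_single)
      fix b assume "b \<in> {..m}" "b \<noteq> 1"
      thus "(\<phi> ^^ b) (XA A (m - b)) \<circ> cpU n b = 0"
        using comp_zero[OF discalg_bop[OF aut_pow_discalg[OF phi XAd[OF A]]]] by (simp add: cpU_def)
    qed (use False in auto)
    also have "\<dots> = (if m = 1 then \<phi> A else 0)"
    proof (cases "m = 1")
      case True
      have "\<phi> A \<circ> IdF n = \<phi> A"
        by (rule ext) (auto simp: IdF_def bop_out[OF discalg_bop[OF pA]] bop_zero'[OF discalg_bop[OF pA]])
      thus ?thesis using True by (simp add: XA_def cpU_def)
    next
      case False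
      hence "XA A (m - 1) = 0" using \<open>m \<noteq> 0\<close> by (simp add: XA_def)
      thus ?thesis using False aut_zero[OF phi] by (simp add: cpU_def comp_def zero_fun_def)
    qed
    finally show ?thesis .
  qed
  have R: "cpmult \<phi> (cpU n) (XA (\<phi> A)) m = (if m = 1 then \<phi> A else 0)"
  proof -
    have "cpmult \<phi> (cpU n) (XA (\<phi> A)) m = (\<phi> ^^ 0) (cpU n (m - 0)) \<circ> XA (\<phi> A) 0"
      unfolding cpmult_def
    proof (rule sum_single)
      fix b assume "b \<in> {..m}" "b \<noteq> 0"
      thus "(\<phi> ^^ b) (cpU n (m - b)) \<circ> XA (\<phi> A) b = 0"
        using comp_zero[OF discalg_bop[OF aut_pow_discalg[OF phi cUd]]] by (simp add: XA_def)
    qed auto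
    also have "\<dots> = (if m = 1 then \<phi> A else 0)"
    proof (cases "m = 1")
      case True
      have "IdF n \<circ> \<phi> A = \<phi> A"
      proof (rule ext)
        fix f show "(IdF n \<circ> \<phi> A) f = \<phi> A f"
          by (cases "f \<in> fock n") (simp_all add: IdF_fock bop_fock[OF discalg_bop[OF pA]] bop_out[OF discalg_bop[OF pA]] IdF_def)
      qed
      thus ?thesis using True by (simp add: XA_def cpU_def)
    next
      case False
      thus ?thesis by (simp add: cpU_def XA_def comp_def zero_fun_def)
    qed
    finally show ?thesis .
  qed
  show "cpmult \<phi> (XA A) (cpU n) m = cpmult \<phi> (cpU n) (XA (\<phi> A)) m" using L R by simp
qed

lemma ballN_cballN: "z \<in> ballN n \<Longrightarrow> z \<in> cballN n"
  unfolding ballN_def cballN_def by auto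

theorem lemma4p2:
  fixes n k :: nat and \<phi> :: "fop \<Rightarrow> fop" and Z :: "nat \<Rightarrow> nat \<Rightarrow> complex"
    and \<rho> :: "(nat \<Rightarrow> fop) \<Rightarrow> cmat"
  assumes "n \<ge> 2"
    and "is_aut n \<phi>"
    and "\<forall>i. Z i \<in> ballN n"
    and "range Z \<inter> range (\<lambda>i. phihat n \<phi> (Z i)) = {}"
    and "\<rho> \<in> NZk n \<phi> Z k"
  shows "\<rho> (cpU n) = (\<lambda>i j. 0)"
proof -
  note phi = assms(2)
  have nr: "nest_rep n \<phi> k \<rho>" and diag: "\<And>i X. i < k \<Longrightarrow> X \<in> cp n \<Longrightarrow> \<rho> X i i = theta0 n (Z i) X"
    using assms(5) unfolding NZk_def by auto
  have add: "\<And>X Y. X \<in> cp n \<Longrightarrow> Y \<in> cp n \<Longrightarrow> \<rho> (X + Y) = \<rho> X + \<rho> Y"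
    and mul: "\<And>X Y. X \<in> cp n \<Longrightarrow> Y \<in> cp n \<Longrightarrow> \<rho> (cpmult \<phi> X Y) = mmult k (\<rho> X) (\<rho> Y)"
    and img: "\<rho> ` cp n = uptri k"
    using nr unfolding nest_rep_def by auto
  have up: "\<And>X i j. X \<in> cp n \<Longrightarrow> k \<le> i \<or> k \<le> j \<or> j < i \<Longrightarrow> \<rho> X i j = 0"
    using img unfolding uptri_def by blast
  have zc: "Z i \<in> cballN n" for i using assms(3) ballN_cballN by auto
  let ?M = "\<rho> (cpU n)"
  have rho0: "\<rho> 0 = 0"
  proof -
    have "\<rho> (0 + 0) = \<rho> 0 + \<rho> 0" using add zero_cp by blast
    thus ?thesis by simp
  qed
  have Mdiag: "?M i i = 0" if "i < k" for i
  proof -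
    have "?M i i = theta n (Z i) 0" using diag[OF that cpU_cp] by (simp add: theta0_def cpU_def)
    also have "\<dots> = \<rho> 0 i i" using diag[OF that zero_cp] by (simp add: theta0_def)
    finally show ?thesis using rho0 by simp
  qed
  have key: "\<forall>i j. j - i = d \<longrightarrow> i \<le> j \<longrightarrow> j < k \<longrightarrow> ?M i j = 0" for d
  proof (induction d rule: less_induct)
    case (less d)
    show ?case
    proof (intro allI impI)
      fix i j assume d: "j - i = d" and ij: "i \<le> j" and jk: "j < k"
      show "?M i j = 0"
      proof (cases "i = j")
        case True thus ?thesis using Mdiag jk by simp
      next
        case False
        hence ij': "i < j" using ij by simp
        have IH: "?M a b = 0" if "a \<le> b" "b < k" "b - a < d" for a b using less that by blast
        show ?thesis
        proof (rule ccontr)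
          assume Mij: "?M i j \<noteq> 0"
          have eqA: "theta n (Z i) A = theta n (Z j) (\<phi> A)" if A: "A \<in> discalg n" for A
          proof -
            have pA: "\<phi> A \<in> discalg n" using aut_discalg[OF phi A] .
            let ?P = "\<rho> (XA A)" and ?Q = "\<rho> (XA (\<phi> A))"
            have "mmult k ?P ?M = mmult k ?M ?Q"
              using mul[OF XA_cp[OF A] cpU_cp] mul[OF cpU_cp XA_cp[OF pA]] covariance[OF phi A] by simp
            hence E: "(\<Sum>l<k. ?P i l * ?M l j) = (\<Sum>l<k. ?M i l * ?Q l j)" unfolding mmult_def by meson
            have "(\<Sum>l<k. ?P i l * ?M l j) = ?P i i * ?M i j"
            proof (rule sum_single)
              fix l assume l: "l \<in> {..<k}" "l \<noteq> i"
              show "?P i l * ?M l j = 0"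
              proof (cases "l < i")
                case True thus ?thesis using up[OF XA_cp[OF A]] by simp
              next
                case False
                hence "i < l" using l by simp
                thus ?thesis
                  using up[OF cpU_cp, of l j] IH[of l j] jk d by (cases "l \<le> j") auto
              qed
            qed (use ij jk in auto)
            moreover have "(\<Sum>l<k. ?M i l * ?Q l j) = ?M i j * ?Q j j"
            proof (rule sum_single)
              fix l assume l: "l \<in> {..<k}" "l \<noteq> j"
              show "?M i l * ?Q l j = 0"
              proof (cases "l < j")
                case True
                thus ?thesis
                  using up[OF cpU_cp, of i l] IH[of i l] l d by (cases "i \<le> l") auto
              next
                case False
                hence "j < l" using l by simp
                thus ?thesis using up[OF XA_cp[OF pA]] by simp
              qed
            qed (use jk in auto)
            ultimately have "?P i i = ?Q j j" using E Mij by simp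
            moreover have "?P i i = theta n (Z i) A" using diag[OF _ XA_cp[OF A], of i] ij jk
              by (simp add: theta0_def XA_def)
            moreover have "?Q j j = theta n (Z j) (\<phi> A)" using diag[OF jk XA_cp[OF pA]]
              by (simp add: theta0_def XA_def)
            ultimately show ?thesis by simp
          qed
          have thZ: "theta n (Z i) = (\<lambda>A. if A \<in> discalg n then theta n (Z j) (\<phi> A) else 0)"
          proof (rule ext)
            fix A show "theta n (Z i) A = (if A \<in> discalg n then theta n (Z j) (\<phi> A) else 0)"
              using eqA theta_eq[OF zc[of i]] by (simp add: chi_def)
          qed
          have "phihat n \<phi> (Z j) = Z i"
            unfolding phihat_def
          proof (rule the_equality)
            show "Z i \<in> cballN n \<and> theta n (Z i) = (\<lambda>A. if A \<in> discalg n then theta n (Z j) (\<phi> A) else 0)"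
              using zc thZ by simp
            fix w assume w: "w \<in> cballN n \<and> theta n w = (\<lambda>A. if A \<in> discalg n then theta n (Z j) (\<phi> A) else 0)"
            hence tw: "chi n w = chi n (Z i)" using thZ theta_eq zc by metis
            show "w = Z i"
            proof (rule ext)
              fix l show "w l = Z i l"
              proof (cases "l < n")
                case True
                thus ?thesis using chi_Sop[OF conjunct1[OF w] True] chi_Sop[OF zc True] tw by simp
              next
                case False
                thus ?thesis using w zc[of i] unfolding cballN_def by auto
              qed
            qed
          qed
          thus False using assms(4) by blast
        qed
      qed
    qed
  qed
  show ?thesis
  proof (intro ext)
    fix i j show "?M i j = 0"
    proof (cases "k \<le> i \<or> k \<le> j \<or> j < i")
      case True thus ?thesis using up[OF cpU_cp] by simp
    next
      case False thus ?thesis using key by simp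
    qed
  qed
qed


end
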